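(* Under the hypotheses below, there exists a random variable $B_\infty$ such that $\lim_{t\to\infty}B_{\phi_t}(x^*,x_t)=B_\infty<\infty$ almost surely.
   Context: $\|\cdot\|$ is the Euclidean norm, $G>0$. For differentiable $f$, $B_f(x,y)=f(x)-f(y)-\langle\nabla f(y),x-y\rangle$. A function $F:\mathbb{R}^d\to\mathbb{R}$ is variationally coherent if it is continuously differentiable, has a unique minimizer $x^*$, and $\langle\nabla F(x),x-x^*\rangle\ge0$ for all $x$, with equality iff $x=x^*$. Hypotheses: $F$ is variationally coherent with minimizer $x^*$; iterates $x_t$ are produced by Algorithm 1 (below, with $x_0=0$); $\mathcal{F}_t$ is the $\sigma$-algebra generated by $x_1,\dots,x_t,g_1,\dots,g_{t-1}$; $\mathbb{E}[g_t\mid\mathcal{F}_t]=\nabla F(x_t)$, $\|g_t\|\le G$ a.s.; $\eta_t\ge0$ is $\mathcal{F}_t$-measurable; for some $\gamma>0$, a.s. $\sum_t\eta_t^2\|g_t\|^2<\gamma$, $\sum_t\eta_t=\infty$, and $\eta_t\le1/G$ for all $t$. Auxiliary functions: $\psi^*(\theta,S,Q)=\exp\big(\max_{\beta\in[-1/2,1/2]}(\theta\beta-\beta^2S^2)-Q\big)$ for $\theta\in\mathbb{R},S>0,Q\ge0$; $\psi(x,S,Q)=\sup_{\theta\in\mathbb{R}}(\theta x-\psi^*(\theta,S,Q))$. Algorithm 1 with $x_0=0$: $S_0^2=4$, $Q_0=0$, $\theta_0=0$. For $t=1,2,\dots$: $\phi_t(x)=\psi(\|x\|,S_{t-1},Q_{t-1})$;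 $x_t$ is the unique minimizer of $\phi_t(x)-\langle\theta_{t-1},x\rangle$ (explicitly $x_t=\frac{\theta_{t-1}}{2S_{t-1}^2}\exp(\frac{\|\theta_{t-1}\|^2}{4S_{t-1}^2}-Q_{t-1})$ if $\|\theta_{t-1}\|\le S_{t-1}^2$, else $\frac{\theta_{t-1}}{2\|\theta_{t-1}\|}\exp(\frac{\|\theta_{t-1}\|}{2}-\frac{S_{t-1}^2}{4}-Q_{t-1})$); receive $g_t$; $\ell_t=\eta_tg_t$, $S_t^2=S_{t-1}^2+\|\ell_t\|^2$, $Q_t=Q_{t-1}+\|\ell_t\|^2/S_t^2$, $\theta_t=\theta_{t-1}-\ell_t$. *)

theory Defs
  imports "HOL-Analysis.Analysis" "HOL-Probability.Probability"
begin

definition bregman :: "('v::euclidean_space \<Rightarrow> real) \<Rightarrow> 'v \<Rightarrow> 'v \<Rightarrow> real" where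
  "bregman f x y = f x - f y - (THE v. (f has_derivative (\<lambda>h. v \<bullet> h)) (at y)) \<bullet> (x - y)"

definition variationally_coherent ::
  "('v::euclidean_space \<Rightarrow> real) \<Rightarrow> ('v \<Rightarrow> 'v) \<Rightarrow> 'v \<Rightarrow> bool" where
  "variationally_coherent F gradF xstar \<longleftrightarrow>
     (\<forall>x. (F has_derivative (\<lambda>h. gradF x \<bullet> h)) (at x)) \<and>
     continuous_on UNIV gradF \<and>
     (\<forall>x. F xstar \<le> F x) \<and> (\<forall>y. (\<forall>x. F y \<le> F x) \<longrightarrow> y = xstar) \<and>
     (\<forall>x. gradF x \<bullet> (x - xstar) \<ge> 0) \<and>
     (\<forall>x. gradF x \<bullet> (x - xstar) = 0 \<longleftrightarrow> x = xstar)"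

definition psi_star :: "real \<Rightarrow> real \<Rightarrow> real \<Rightarrow> real" where
  "psi_star \<theta> S Q = exp ((SUP \<beta>\<in>{-1/2..1/2}. \<theta> * \<beta> - \<beta>\<^sup>2 * S\<^sup>2) - Q)"

definition psi :: "real \<Rightarrow> real \<Rightarrow> real \<Rightarrow> real" where
  "psi x S Q = (SUP \<theta>::real. \<theta> * x - psi_star \<theta> S Q)"

text \<open>State (S_t^2, Q_t, theta_t) of Algorithm 1 (x_0 = 0) after step t,
  for losses g_1, g_2, ... and step sizes eta_1, eta_2, ... (index 0 unused).\<close>
fun alg_state :: "(nat \<Rightarrow> 'v::real_normed_vector) \<Rightarrow> (nat \<Rightarrow> real) \<Rightarrow> nat \<Rightarrow> real \<times> real \<times> 'v" where
  "alg_state g eta 0 = (4, 0, 0)"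
| "alg_state g eta (Suc t) =
     (case alg_state g eta t of (S2, Q, \<theta>) \<Rightarrow>
        let l = eta (Suc t) *\<^sub>R g (Suc t); S2' = S2 + (norm l)\<^sup>2
        in (S2', Q + (norm l)\<^sup>2 / S2', \<theta> - l))"

text \<open>Iterate x_t (t >= 1), via the explicit minimizer formula.\<close>
definition alg_x :: "(nat \<Rightarrow> 'v::real_normed_vector) \<Rightarrow> (nat \<Rightarrow> real) \<Rightarrow> nat \<Rightarrow> 'v" where
  "alg_x g eta t =
     (case alg_state g eta (t - 1) of (S2, Q, \<theta>) \<Rightarrow>
        if norm \<theta> \<le> S2
        then (exp ((norm \<theta>)\<^sup>2 / (4 * S2) - Q) / (2 * S2)) *\<^sub>R \<theta>
        else (exp (norm \<theta> / 2 - S2 / 4 - Q) / (2 * norm \<theta>)) *\<^sub>R \<theta>)"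

definition alg_phi :: "(nat \<Rightarrow> 'v::real_normed_vector) \<Rightarrow> (nat \<Rightarrow> real) \<Rightarrow> nat \<Rightarrow> 'v \<Rightarrow> real" where
  "alg_phi g eta t x =
     (case alg_state g eta (t - 1) of (S2, Q, \<theta>) \<Rightarrow> psi (norm x) (sqrt S2) Q)"

definition alg_filtration ::
  "'a measure \<Rightarrow> (nat \<Rightarrow> 'a \<Rightarrow> 'v::euclidean_space) \<Rightarrow> (nat \<Rightarrow> 'a \<Rightarrow> 'v) \<Rightarrow> nat \<Rightarrow> 'a measure" where
  "alg_filtration M x g t = sigma (space M)
     ((\<Union>i\<in>{1..t}. {x i -` A \<inter> space M | A. A \<in> sets borel}) \<union>
      (\<Union>i\<in>{1..<t}. {g i -` A \<inter> space M | A. A \<in> sets borel}))"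

end

theory Submission
  imports Defs
begin


definition mm :: "real \<Rightarrow> real \<Rightarrow> real" where
  "mm S2 r = (if r \<le> S2 then r\<^sup>2 / (4*S2) else r/2 - S2/4)"

definition bb :: "real \<Rightarrow> 'v::real_normed_vector \<Rightarrow> 'v" where
  "bb S2 v = (if norm v \<le> S2 then 1/(2*S2) else 1/(2*norm v)) *\<^sub>R v"

lemma mm_lower_scalar:
  assumes "0 \<le> c" "c \<le> 1/2" "0 \<le> r" "S2 > 0"
  shows "c*r - c\<^sup>2*S2 \<le> mm S2 r"
proof (cases "r \<le> S2")
  case True
  have "r\<^sup>2 / (4*S2) - (c*r - c\<^sup>2*S2) = (r - 2*c*S2)\<^sup>2 / (4*S2)"
    using assms by (simp add: field_simps power2_eq_square)
  moreover have "(r - 2*c*S2)\<^sup>2 / (4*S2) \<ge> 0" using assms by simp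
  ultimately show ?thesis using True by (simp add: mm_def)
next
  case False
  have "r/2 - S2/4 - (c*r - c\<^sup>2*S2) = (1/2 - c) * (r - S2*(1/2 + c))"
    by (simp add: field_simps power2_eq_square)
  moreover have "(1/2 - c) * (r - S2*(1/2 + c)) \<ge> 0"
    using assms False by (intro mult_nonneg_nonneg) (auto intro: order_trans[of _ "S2*1"] mult_left_mono)
  ultimately show ?thesis using False by (simp add: mm_def)
qed

lemma mm_lower:
  fixes \<beta> u :: "'v::real_inner"
  assumes "norm \<beta> \<le> 1/2" "S2 > 0"
  shows "\<beta> \<bullet> u - (norm \<beta>)\<^sup>2*S2 \<le> mm S2 (norm u)"
proof -
  have "\<beta> \<bullet> u \<le> norm \<beta> * norm u" by (rule norm_cauchy_schwarz)
  moreover have "norm \<beta> * norm u - (norm \<beta>)\<^sup>2*S2 \<le> mm S2 (norm u)"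
    by (rule mm_lower_scalar) (use assms in auto)
  ultimately show ?thesis by linarith
qed

lemma norm_bb: "S2 > 0 \<Longrightarrow> norm (bb S2 (v::'v::real_normed_vector)) = (if norm v \<le> S2 then norm v/(2*S2) else 1/2)"
  by (auto simp: bb_def)

lemma norm_bb_le: "S2 > 0 \<Longrightarrow> norm (bb S2 (v::'v::real_normed_vector)) \<le> 1/2"
  by (auto simp: norm_bb field_simps)

lemma bb_inner: "S2 > 0 \<Longrightarrow> bb S2 v \<bullet> (v::'v::real_inner) = norm (bb S2 v) * norm v"
  by (auto simp: bb_def norm_bb power2_eq_square dot_square_norm)

lemma bb_value:
  fixes v :: "'v::real_inner"
  assumes "S2 > 0"
  shows "bb S2 v \<bullet> v - (norm (bb S2 v))\<^sup>2 * S2 = mm S2 (norm v)"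
  using assms by (auto simp: bb_inner norm_bb mm_def field_simps power2_eq_square)

lemma psi_star_closed:
  assumes "S > 0"
  shows "psi_star t S Q = exp (mm (S\<^sup>2) \<bar>t\<bar> - Q)"
proof -
  have S2: "S\<^sup>2 > 0" using assms by simp
  have "(SUP \<beta>\<in>{-1/2..1/2}. t * \<beta> - \<beta>\<^sup>2 * S\<^sup>2) = mm (S\<^sup>2) \<bar>t\<bar>"
    unfolding image_def
  proof (rule cSup_eq_maximum)
    have "norm (bb (S\<^sup>2) t) \<le> 1/2" by (rule norm_bb_le[OF S2])
    hence "bb (S\<^sup>2) t \<in> {-1/2..1/2}" by auto
    moreover have "t * bb (S\<^sup>2) t - (bb (S\<^sup>2) t)\<^sup>2 * S\<^sup>2 = mm (S\<^sup>2) \<bar>t\<bar>"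
      using bb_value[OF S2, of t] by (simp add: mult.commute)
    ultimately show "mm (S\<^sup>2) \<bar>t\<bar> \<in> {y. \<exists>x\<in>{- 1 / 2..1 / 2}. y = t * x - x\<^sup>2 * S\<^sup>2}" by force
  next
    fix y assume "y \<in> {y. \<exists>x\<in>{- 1 / 2..1 / 2}. y = t * x - x\<^sup>2 * S\<^sup>2}"
    then obtain \<beta> where b: "\<beta> \<in> {-1/2..1/2}" "y = t*\<beta> - \<beta>\<^sup>2 * S\<^sup>2" by auto
    have "\<beta> \<bullet> t - (norm \<beta>)\<^sup>2 * S\<^sup>2 \<le> mm (S\<^sup>2) (norm t)"
      by (rule mm_lower) (use b S2 in auto)
    thus "y \<le> mm (S\<^sup>2) \<bar>t\<bar>" using b by (simp add: mult.commute)
  qed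
  thus ?thesis by (simp add: psi_star_def)
qed


lemma ln_lower_aux:
  fixes y :: real assumes "0 \<le> y" "y \<le> 1/2"
  shows "- y - y\<^sup>2 \<le> ln (1 - y)"
proof -
  let ?f = "\<lambda>x::real. ln (1 - x) + x + x\<^sup>2"
  have "?f 0 \<le> ?f y"
  proof (rule DERIV_nonneg_imp_nondecreasing[OF assms(1)])
    fix x :: real assume x: "0 \<le> x" "x \<le> y"
    have "DERIV ?f x :> (- 1 / (1 - x) + 1 + 2 * x)"
      using x assms by (auto intro!: derivative_eq_intros simp: power2_eq_square)
    moreover have "- 1 / (1 - x) + 1 + 2 * x \<ge> 0"
    proof -
      have "- 1 / (1 - x) + 1 + 2 * x = x * (1 - 2*x) / (1 - x)"
        using x assms by (simp add: field_simps)
      also have "\<dots> \<ge> 0" using x assms by (intro divide_nonneg_pos mult_nonneg_nonneg) auto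
      finally show ?thesis .
    qed
    ultimately show "\<exists>d. DERIV ?f x :> d \<and> d \<ge> 0" by blast
  qed
  thus ?thesis by simp
qed

lemma exp_aux:
  fixes y :: real assumes "\<bar>y\<bar> \<le> 1/2"
  shows "exp (- y - y\<^sup>2) \<le> 1 - y"
proof -
  have "- y - y\<^sup>2 \<le> ln (1 - y)"
  proof (cases "y \<ge> 0")
    case True thus ?thesis using ln_lower_aux assms by auto
  next
    case False
    have "(-y) - (-y)\<^sup>2 \<le> ln (1 + (-y))"
      by (rule ln_one_plus_pos_lower_bound) (use False assms in auto)
    thus ?thesis by simp
  qed
  thus ?thesis using assms by (subst (asm) ln_ge_iff) auto
qed

definition EE :: "real \<Rightarrow> real \<Rightarrow> 'v::real_normed_vector \<Rightarrow> real" where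
  "EE S2 Q v = exp (mm S2 (norm v) - Q)"

definition gradE :: "real \<Rightarrow> real \<Rightarrow> 'v::real_normed_vector \<Rightarrow> 'v" where
  "gradE S2 Q v = EE S2 Q v *\<^sub>R bb S2 v"

lemma EE_pos: "EE S2 Q v > 0" by (simp add: EE_def)

lemma support:
  fixes u v :: "'v::real_inner"
  assumes "S2 > 0"
  shows "EE S2 Q v + gradE S2 Q v \<bullet> (u - v) \<le> EE S2 Q u"
proof -
  let ?b = "bb S2 v"
  have "?b \<bullet> u - (norm ?b)\<^sup>2 * S2 \<le> mm S2 (norm u)"
    by (rule mm_lower[OF norm_bb_le[OF assms] assms])
  moreover have "?b \<bullet> v - (norm ?b)\<^sup>2 * S2 = mm S2 (norm v)" by (rule bb_value[OF assms])
  ultimately have h: "mm S2 (norm v) + ?b \<bullet> (u - v) \<le> mm S2 (norm u)"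
    by (simp add: inner_diff_right)
  have "EE S2 Q v * (1 + ?b \<bullet> (u - v)) \<le> EE S2 Q v * exp (?b \<bullet> (u - v))"
    by (intro mult_left_mono) (auto simp: EE_def exp_ge_add_one_self)
  also have "\<dots> = exp (mm S2 (norm v) + ?b \<bullet> (u - v) - Q)"
    unfolding EE_def exp_add[symmetric] by (simp add: algebra_simps)
  also have "\<dots> \<le> EE S2 Q u" using h by (simp add: EE_def)
  finally show ?thesis by (simp add: gradE_def algebra_simps)
qed

lemma potential:
  fixes \<theta> l :: "'v::real_inner"
  assumes S2: "S2 > 0" and l1: "norm l \<le> 1"
  shows "EE (S2 + (norm l)\<^sup>2) (Q + (norm l)\<^sup>2 / (S2 + (norm l)\<^sup>2)) (\<theta> - l)
           \<le> EE S2 Q \<theta> - l \<bullet> gradE S2 Q \<theta>"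
proof -
  define L where "L = (norm l)\<^sup>2"
  define P where "P = S2 + L"
  have L0: "0 \<le> L" and L1: "L \<le> 1" using l1 by (auto simp: L_def power_le_one)
  have P0: "P > 0" using S2 L0 by (simp add: P_def)
  define b where "b = bb S2 \<theta>"
  define \<beta> where "\<beta> = bb P (\<theta> - l)"
  define \<delta> where "\<delta> = \<beta> - b"
  define y where "y = l \<bullet> b"
  define w where "w = l + (2*L) *\<^sub>R b"
  have nb: "norm b \<le> 1/2" using norm_bb_le[OF S2] by (simp add: b_def)
  have nbeta: "norm \<beta> \<le> 1/2" using norm_bb_le[OF P0] by (simp add: \<beta>_def)
  have h1: "mm P (norm (\<theta> - l)) = \<beta> \<bullet> (\<theta> - l) - (norm \<beta>)\<^sup>2 * P"
    using bb_value[OF P0, of "\<theta> - l"] by (simp add: \<beta>_def)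
  have h2: "mm S2 (norm \<theta>) = b \<bullet> \<theta> - (norm b)\<^sup>2 * S2"
    using bb_value[OF S2, of \<theta>] by (simp add: b_def)
  have h3a: "(b - \<beta>) \<bullet> (\<theta> - (2*S2) *\<^sub>R b) \<ge> 0"
  proof (cases "norm \<theta> \<le> S2")
    case True
    hence "\<theta> - (2*S2) *\<^sub>R b = 0" using S2 by (simp add: b_def bb_def)
    thus ?thesis by simp
  next
    case False
    hence nt: "norm \<theta> > S2" by simp
    hence "\<theta> - (2*S2) *\<^sub>R b = (1 - S2 / norm \<theta>) *\<^sub>R \<theta>" using S2 by (simp add: b_def bb_def algebra_simps)
    hence "(b - \<beta>) \<bullet> (\<theta> - (2*S2) *\<^sub>R b) = (1 - S2 / norm \<theta>) * ((b - \<beta>) \<bullet> \<theta>)" by simp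
    moreover have "1 - S2 / norm \<theta> \<ge> 0" using nt S2 by (simp add: divide_le_eq_1)
    moreover have "(b - \<beta>) \<bullet> \<theta> \<ge> 0"
    proof -
      have "b \<bullet> \<theta> = norm \<theta> / 2" using nt S2 by (simp add: b_def bb_def dot_square_norm power2_eq_square)
      moreover have "\<beta> \<bullet> \<theta> \<le> norm \<beta> * norm \<theta>" by (rule norm_cauchy_schwarz)
      moreover have "norm \<beta> * norm \<theta> \<le> 1/2 * norm \<theta>" using nbeta by (intro mult_right_mono) auto
      ultimately show ?thesis by (simp add: inner_diff_left)
    qed
    ultimately show ?thesis by simp
  qed
  have h3: "\<beta> \<bullet> \<theta> - (norm \<beta>)\<^sup>2 * S2 \<le> mm S2 (norm \<theta>) - S2 * (norm \<delta>)\<^sup>2"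
  proof -
    have e: "mm S2 (norm \<theta>) - \<beta> \<bullet> \<theta> + (norm \<beta>)\<^sup>2 * S2 - S2 * (norm \<delta>)\<^sup>2
           = (b - \<beta>) \<bullet> (\<theta> - (2*S2) *\<^sub>R b)"
      unfolding h2 \<delta>_def
      by (simp add: dot_square_norm[symmetric] inner_diff_left inner_diff_right inner_commute algebra_simps)
    show ?thesis using e h3a by linarith
  qed
  have h4: "P * (norm \<delta>)\<^sup>2 + \<delta> \<bullet> w \<ge> - (norm w)\<^sup>2 / (4*P)"
  proof -
    have "0 \<le> (norm ((2*P) *\<^sub>R \<delta> + w))\<^sup>2" by simp
    also have "\<dots> = 4*P\<^sup>2 * (norm \<delta>)\<^sup>2 + 4*P*(\<delta> \<bullet> w) + (norm w)\<^sup>2"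
      unfolding power2_norm_eq_inner by (simp add: inner_add_left inner_add_right inner_commute algebra_simps power2_eq_square)
    finally have "0 \<le> 4*P*(P * (norm \<delta>)\<^sup>2 + \<delta> \<bullet> w) + (norm w)\<^sup>2" by (simp add: algebra_simps power2_eq_square)
    thus ?thesis using P0 by (simp add: field_simps)
  qed
  have h5: "(norm w)\<^sup>2 = L + 4*L*y + 4*L\<^sup>2*(norm b)\<^sup>2"
  proof -
    have ll: "l \<bullet> l = L" by (simp add: L_def power2_norm_eq_inner)
    have "(norm w)\<^sup>2 = l \<bullet> l + 4*L*(l \<bullet> b) + 4*L\<^sup>2*(b \<bullet> b)"
      unfolding power2_norm_eq_inner w_def
      by (simp add: inner_add_left inner_add_right inner_commute algebra_simps power2_eq_square)
    thus ?thesis by (simp add: ll y_def power2_norm_eq_inner)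
  qed
  have h6: "y\<^sup>2 \<le> L * (norm b)\<^sup>2"
  proof -
    have "\<bar>y\<bar> \<le> norm l * norm b" unfolding y_def by (rule Cauchy_Schwarz_ineq2)
    hence "\<bar>y\<bar>\<^sup>2 \<le> (norm l * norm b)\<^sup>2" by (intro power_mono) auto
    hence "y\<^sup>2 \<le> (norm l * norm b)\<^sup>2" by simp
    thus ?thesis by (simp add: L_def power_mult_distrib)
  qed
  have hy: "\<bar>y\<bar> \<le> 1/2"
  proof -
    have "\<bar>y\<bar> \<le> norm l * norm b" unfolding y_def by (rule Cauchy_Schwarz_ineq2)
    also have "\<dots> \<le> 1 * (1/2)" using l1 nb by (intro mult_mono) auto
    finally show ?thesis by simp
  qed
  have hb2: "(norm b)\<^sup>2 \<le> 1/4"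
  proof -
    have "(norm b)\<^sup>2 \<le> (1/2)\<^sup>2" using nb by (intro power_mono) auto
    thus ?thesis by (simp add: power2_eq_square)
  qed
  have key: "mm P (norm (\<theta> - l)) - mm S2 (norm \<theta>) - L / P \<le> - y - y\<^sup>2"
  proof -
    have bd: "\<beta> = b + \<delta>" by (simp add: \<delta>_def)
    have e1: "\<beta> \<bullet> l = y + \<delta> \<bullet> l" by (simp add: bd y_def inner_add_left inner_add_right inner_commute)
    have e2: "(norm \<beta>)\<^sup>2 = (norm b)\<^sup>2 + 2 * (\<delta> \<bullet> b) + (norm \<delta>)\<^sup>2"
      by (simp add: bd dot_square_norm[symmetric] inner_add_left inner_add_right inner_commute algebra_simps)
    have e3: "\<delta> \<bullet> w = \<delta> \<bullet> l + 2*L*(\<delta> \<bullet> b)" by (simp add: w_def inner_add_right)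
    have A: "mm P (norm (\<theta> - l)) \<le> mm S2 (norm \<theta>) - S2 * (norm \<delta>)\<^sup>2 - \<beta> \<bullet> l - (norm \<beta>)\<^sup>2 * L"
      using h1 h3 by (simp add: P_def inner_diff_right algebra_simps)
    have B: "mm P (norm (\<theta> - l)) - mm S2 (norm \<theta>) - L / P
        \<le> - y - (P * (norm \<delta>)\<^sup>2 + \<delta> \<bullet> w) - L * (norm b)\<^sup>2 - L/P"
      using A e1 e2 e3 by (simp add: P_def algebra_simps)
    have C: "- (P * (norm \<delta>)\<^sup>2 + \<delta> \<bullet> w) - L * (norm b)\<^sup>2 - L/P \<le> - y\<^sup>2"
    proof -
      have "(norm w)\<^sup>2 / (4*P) - L * (norm b)\<^sup>2 - L/P \<le> - y\<^sup>2"
      proof -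
        have "4*P*(y\<^sup>2 - L*(norm b)\<^sup>2) \<le> 0" using h6 P0 by (simp add: mult_nonneg_nonpos)
        moreover have "L*(4*y + 4*L*(norm b)\<^sup>2 - 3) \<le> 0"
        proof -
          have "L*(norm b)\<^sup>2 \<le> 1 * (1/4)" using L0 L1 hb2 by (intro mult_mono) auto
          hence "4*y + 4*L*(norm b)\<^sup>2 - 3 \<le> 0" using hy by auto
          thus ?thesis using L0 by (simp add: mult_nonneg_nonpos)
        qed
        ultimately have "(norm w)\<^sup>2 - 4*P*L*(norm b)\<^sup>2 - 4*L \<le> - 4*P*y\<^sup>2"
          unfolding h5 by (simp add: algebra_simps power2_eq_square)
        hence "((norm w)\<^sup>2 - 4*P*L*(norm b)\<^sup>2 - 4*L) / (4*P) \<le> - 4*P*y\<^sup>2 / (4*P)"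
          using P0 by (intro divide_right_mono) auto
        moreover have "((norm w)\<^sup>2 - 4*P*L*(norm b)\<^sup>2 - 4*L) / (4*P) = (norm w)\<^sup>2 / (4*P) - L * (norm b)\<^sup>2 - L/P"
          using P0 by (simp add: field_simps)
        moreover have "- 4*P*y\<^sup>2 / (4*P) = - y\<^sup>2" using P0 by simp
        ultimately show ?thesis by simp
      qed
      thus ?thesis using h4 by linarith
    qed
    show ?thesis using B C by linarith
  qed
  have "EE P (Q + L / P) (\<theta> - l) = EE S2 Q \<theta> * exp (mm P (norm (\<theta> - l)) - mm S2 (norm \<theta>) - L / P)"
    unfolding EE_def exp_add[symmetric] by (simp add: algebra_simps)
  also have "\<dots> \<le> EE S2 Q \<theta> * exp (- y - y\<^sup>2)"
    using key by (intro mult_left_mono) (auto simp: EE_def)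
  also have "\<dots> \<le> EE S2 Q \<theta> * (1 - y)"
    using exp_aux[OF hy] by (intro mult_left_mono) (auto simp: EE_def)
  also have "\<dots> = EE S2 Q \<theta> - l \<bullet> gradE S2 Q \<theta>"
    by (simp add: gradE_def y_def b_def algebra_simps)
  finally show ?thesis by (simp add: L_def P_def)
qed


lemma EE_real_norm: "EE S2 Q (t::real) = exp (mm S2 \<bar>t\<bar> - Q)" by (simp add: EE_def)

lemma psi_eq:
  assumes "S2 > 0"
  shows "psi s (sqrt S2) Q = (SUP t::real. t* s - EE S2 Q t)"
proof -
  have "\<And>t. psi_star t (sqrt S2) Q = EE S2 Q t"
    using assms by (simp add: psi_star_closed EE_real_norm)
  thus ?thesis by (simp add: psi_def)
qed

lemma EE_lower_lin:
  assumes "S2 > 0"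
  shows "exp (\<bar>t\<bar>/2 - S2/4 - Q) \<le> EE S2 Q (t::real)"
proof -
  have "1/2 * \<bar>t\<bar> - (1/2)\<^sup>2 * S2 \<le> mm S2 \<bar>t\<bar>"
    by (rule mm_lower_scalar) (use assms in auto)
  thus ?thesis by (simp add: EE_real_norm power2_eq_square)
qed

lemma EE_lower_quad:
  assumes "S2 > 0"
  shows "exp (- S2/4 - Q) * t\<^sup>2 / 8 \<le> EE S2 Q (t::real)"
proof -
  have "(\<bar>t\<bar>/2)\<^sup>2 / 2 \<le> 1 + \<bar>t\<bar>/2 + (\<bar>t\<bar>/2)\<^sup>2 / 2" by simp
  also have "\<dots> \<le> exp (\<bar>t\<bar>/2)" by (rule exp_lower_Taylor_quadratic) simp
  finally have a: "t\<^sup>2/8 \<le> exp (\<bar>t\<bar>/2)" by (simp add: power2_eq_square)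
  have "exp (- S2/4 - Q) * t\<^sup>2 / 8 \<le> exp (- S2/4 - Q) * exp (\<bar>t\<bar>/2)"
    using a by (simp add: mult_left_mono divide_le_eq mult.assoc[symmetric])
  also have "\<dots> = exp (\<bar>t\<bar>/2 - S2/4 - Q)" by (simp add: exp_add[symmetric])
  also have "\<dots> \<le> EE S2 Q t" by (rule EE_lower_lin[OF assms])
  finally show ?thesis .
qed

lemma psi_bdd:
  assumes "S2 > 0"
  shows "bdd_above (range (\<lambda>t::real. t* s - EE S2 Q t))"
proof -
  define a where "a = exp (- S2/4 - Q) / 8"
  have a0: "a > 0" by (simp add: a_def)
  have "t* s - EE S2 Q t \<le> s\<^sup>2 / (4*a)" for t
  proof -
    have "t* s - a*t\<^sup>2 \<le> s\<^sup>2 / (4*a)"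
    proof -
      have "0 \<le> (2*a*t - s)\<^sup>2 / (4*a)" using a0 by simp
      also have "(2*a*t - s)\<^sup>2 / (4*a) = s\<^sup>2/(4*a) - (t* s - a*t\<^sup>2)"
        using a0 by (simp add: field_simps power2_eq_square)
      finally show ?thesis by simp
    qed
    moreover have "a*t\<^sup>2 \<le> EE S2 Q t" using EE_lower_quad[OF assms, of Q t] by (simp add: a_def)
    ultimately show ?thesis by linarith
  qed
  thus ?thesis by (intro bdd_aboveI2) 
qed

lemma psi_upper_bound:
  assumes "S2 > 0"
  shows "psi s (sqrt S2) Q \<le> s\<^sup>2 * 2 * exp (S2/4 + Q)"
proof -
  define a where "a = exp (- S2/4 - Q) / 8"
  have a0: "a > 0" by (simp add: a_def)
  have "t* s - EE S2 Q t \<le> s\<^sup>2 / (4*a)" for t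
  proof -
    have "t* s - a*t\<^sup>2 \<le> s\<^sup>2 / (4*a)"
    proof -
      have "0 \<le> (2*a*t - s)\<^sup>2 / (4*a)" using a0 by simp
      also have "(2*a*t - s)\<^sup>2 / (4*a) = s\<^sup>2/(4*a) - (t* s - a*t\<^sup>2)"
        using a0 by (simp add: field_simps power2_eq_square)
      finally show ?thesis by simp
    qed
    moreover have "a*t\<^sup>2 \<le> EE S2 Q t" using EE_lower_quad[OF assms, of Q t] by (simp add: a_def)
    ultimately show ?thesis by linarith
  qed
  hence "(SUP t::real. t* s - EE S2 Q t) \<le> s\<^sup>2 / (4*a)" by (intro cSUP_least) auto
  moreover have "s\<^sup>2 / (4*a) = s\<^sup>2 * 2 * exp (S2/4 + Q)"
  proof -
    have "exp (S2/4 + Q) * exp (- S2/4 - Q) = 1" by (simp add: exp_add[symmetric])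
    thus ?thesis by (simp add: a_def field_simps)
  qed
  ultimately show ?thesis using psi_eq[OF assms] by simp
qed

lemma fenchel_young:
  assumes "S2 > 0"
  shows "t* s - EE S2 Q t \<le> psi s (sqrt S2) Q"
  unfolding psi_eq[OF assms] by (rule cSUP_upper[OF UNIV_I psi_bdd[OF assms]])

lemma fenchel_eq:
  assumes "S2 > 0"
  shows "psi (gradE S2 Q t0) (sqrt S2) Q = t0 * gradE S2 Q t0 - EE S2 Q (t0::real)"
proof -
  let ?s = "gradE S2 Q t0"
  have "(SUP t::real. t* ?s - EE S2 Q t) = t0 * ?s - EE S2 Q t0"
    unfolding image_def
  proof (rule cSup_eq_maximum)
    show "t0 * ?s - EE S2 Q t0 \<in> {y. \<exists>x\<in>UNIV. y = x * ?s - EE S2 Q x}" by blast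
  next
    fix y assume "y \<in> {y. \<exists>x\<in>UNIV. y = x * ?s - EE S2 Q x}"
    then obtain t where t: "y = t * ?s - EE S2 Q t" by auto
    have "EE S2 Q t0 + ?s \<bullet> (t - t0) \<le> EE S2 Q t" by (rule support[OF assms])
    thus "y \<le> t0 * ?s - EE S2 Q t0" using t by (simp add: algebra_simps)
  qed
  thus ?thesis using psi_eq[OF assms] by simp
qed

lemma exp_quad_lower:
  fixes u :: real assumes "\<bar>u\<bar> \<le> 1/2"
  shows "1 + u + u\<^sup>2/4 \<le> exp u"
proof -
  obtain \<tau> where \<tau>: "\<bar>\<tau>\<bar> \<le> \<bar>u\<bar>" "exp u = (\<Sum>m<2. u^m / fact m) + exp \<tau> / fact 2 * u^2"
    using Maclaurin_exp_le[of u 2] by blast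
  have "exp (-1/2) \<ge> 1 + (-1/2::real)" by (rule exp_ge_add_one_self)
  moreover have "exp \<tau> \<ge> exp (-1/2)" using \<tau>(1) assms by simp
  ultimately have "exp \<tau> \<ge> 1/2" by linarith
  hence "exp \<tau> / 2 * u^2 \<ge> 1/2/2 * u^2" by (intro mult_right_mono divide_right_mono) auto
  moreover have "exp u = 1 + u + exp \<tau> / 2 * u^2" using \<tau>(2) by (simp add: numeral_2_eq_2)
  ultimately show ?thesis by (simp add: power2_eq_square)
qed

lemma mm_tangent:
  fixes u v :: "'v::real_inner"
  assumes "S2 > 0"
  shows "mm S2 (norm v) + bb S2 v \<bullet> (u - v) \<le> mm S2 (norm u)"
proof -
  let ?b = "bb S2 v"
  have "?b \<bullet> u - (norm ?b)\<^sup>2 * S2 \<le> mm S2 (norm u)"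
    by (rule mm_lower[OF norm_bb_le[OF assms] assms])
  moreover have "?b \<bullet> v - (norm ?b)\<^sup>2 * S2 = mm S2 (norm v)" by (rule bb_value[OF assms])
  ultimately show ?thesis by (simp add: inner_diff_right)
qed

definition D1 :: "real \<Rightarrow> real \<Rightarrow> real \<Rightarrow> real \<Rightarrow> real" where
  "D1 S2 Q t0 w = EE S2 Q (t0 + w) - EE S2 Q t0 - gradE S2 Q t0 * w"

lemma D1_local:
  assumes S2: "S2 \<ge> 1" and t0: "t0 \<ge> 0" and w: "\<bar>w\<bar> \<le> 1"
  shows "EE S2 Q t0 / (64*S2) * w\<^sup>2 \<le> D1 S2 Q t0 w"
proof -
  have S2p: "S2 > 0" using S2 by simp
  define E0 where "E0 = EE S2 Q t0"
  define bs where "bs = bb S2 t0"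
  have E0p: "E0 > 0" by (simp add: E0_def EE_pos)
  have g: "gradE S2 Q t0 = E0 * bs" by (simp add: gradE_def E0_def bs_def)
  have bs0: "bs \<ge> 0" using t0 S2p by (simp add: bs_def bb_def)
  have bs1: "bs \<le> 1/2" using norm_bb_le[OF S2p, of t0] bs0 by (simp add: bs_def)
  show ?thesis
  proof (cases "bs \<ge> 1/4")
    case True
    have tan: "mm S2 \<bar>t0\<bar> + bs * w \<le> mm S2 \<bar>t0 + w\<bar>"
      using mm_tangent[OF S2p, of t0 "t0 + w"] by (simp add: bs_def)
    have "EE S2 Q (t0 + w) \<ge> E0 * exp (bs * w)"
      using tan by (simp add: EE_real_norm E0_def exp_add[symmetric] algebra_simps)
    moreover have "exp (bs*w) \<ge> 1 + bs*w + (bs*w)\<^sup>2/4"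
    proof (rule exp_quad_lower)
      have "bs * \<bar>w\<bar> \<le> 1/2 * 1" using bs0 bs1 w by (intro mult_mono) auto
      hence "\<bar>bs*w\<bar> \<le> 1/2 * 1" using bs0 by (simp add: abs_mult)
      thus "\<bar>bs*w\<bar> \<le> 1/2" by simp
    qed
    ultimately have "EE S2 Q (t0 + w) \<ge> E0 * (1 + bs*w + (bs*w)\<^sup>2/4)"
      using E0p by (meson mult_left_mono less_imp_le order_trans)
    hence "D1 S2 Q t0 w \<ge> E0 * ((bs*w)\<^sup>2/4)"
      by (simp add: D1_def g E0_def[symmetric] algebra_simps)
    moreover have "E0 * ((bs*w)\<^sup>2/4) \<ge> E0 / (64*S2) * w\<^sup>2"
    proof -
      have "(bs*w)\<^sup>2/4 \<ge> w\<^sup>2/64"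
      proof -
        have "bs\<^sup>2 \<ge> (1/4)\<^sup>2" using True by (intro power_mono) auto
        hence "bs\<^sup>2 * w\<^sup>2 \<ge> (1/4)\<^sup>2 * w\<^sup>2" by (intro mult_right_mono) auto
        thus ?thesis by (simp add: power_mult_distrib power2_eq_square algebra_simps)
      qed
      moreover have "w\<^sup>2/64 \<ge> w\<^sup>2/(64*S2)" using S2 by (intro divide_left_mono) auto
      ultimately have "(bs*w)\<^sup>2/4 \<ge> w\<^sup>2/(64*S2)" by linarith
      hence "E0 * ((bs*w)\<^sup>2/4) \<ge> E0 * (w\<^sup>2/(64*S2))" using E0p by (intro mult_left_mono) auto
      thus ?thesis by simp
    qed
    ultimately show ?thesis by (simp add: E0_def)
  next
    case False
    have tS: "t0 \<le> S2"
    proof (rule ccontr)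
      assume "\<not> t0 \<le> S2" thus False using False t0 S2p by (simp add: bs_def bb_def split: if_splits)
    qed
    hence bsv: "bs = t0 / (2*S2)" using t0 by (simp add: bs_def bb_def)
    define \<kappa> where "\<kappa> = 1/(4*S2)"
    define \<beta> where "\<beta> = bs + \<kappa>*w"
    have kb: "\<bar>\<kappa>*w\<bar> \<le> 1/4"
    proof -
      have "\<bar>\<kappa>*w\<bar> = \<bar>w\<bar> / (4*S2)" using S2p by (simp add: \<kappa>_def abs_mult)
      also have "\<dots> \<le> 1 / (4*1)" using w S2 by (intro frac_le) auto
      finally show ?thesis by simp
    qed
    have nb: "norm \<beta> \<le> 1/2" using kb False bs0 abs_triangle_ineq[of bs "\<kappa>*w"] by (simp add: \<beta>_def)
    have low: "\<beta> \<bullet> (t0 + w) - (norm \<beta>)\<^sup>2 * S2 \<le> mm S2 (norm (t0 + w))"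
      by (rule mm_lower[OF nb S2p])
    have mt0: "mm S2 t0 = bs * t0 - bs\<^sup>2 * S2"
      using bb_value[OF S2p, of t0] t0 by (simp add: bs_def power2_eq_square)
    have iden: "\<beta> * (t0 + w) - \<beta>\<^sup>2 * S2 = mm S2 t0 + bs*w + 3/(16*S2) * w\<^sup>2"
      unfolding mt0 \<beta>_def \<kappa>_def bsv using S2p by (simp add: field_simps power2_eq_square)
    have tan: "mm S2 t0 + bs*w + 3/(16*S2) * w\<^sup>2 \<le> mm S2 \<bar>t0 + w\<bar>"
      using low iden by (simp add: power2_eq_square)
    have "EE S2 Q (t0 + w) \<ge> E0 * exp (bs*w + 3/(16*S2) * w\<^sup>2)"
      using tan t0 by (simp add: EE_real_norm E0_def exp_add[symmetric] algebra_simps)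
    moreover have "exp (bs*w + 3/(16*S2) * w\<^sup>2) \<ge> 1 + bs*w + 3/(16*S2) * w\<^sup>2"
      using exp_ge_add_one_self[of "bs*w + 3/(16*S2) * w\<^sup>2"] by (simp add: add.assoc)
    ultimately have "EE S2 Q (t0 + w) \<ge> E0 * (1 + bs*w + 3/(16*S2) * w\<^sup>2)"
      using E0p by (meson mult_left_mono less_imp_le order_trans)
    hence "D1 S2 Q t0 w \<ge> E0 * (3/(16*S2) * w\<^sup>2)"
      by (simp add: D1_def g E0_def[symmetric] algebra_simps)
    moreover have "E0 * (3/(16*S2) * w\<^sup>2) \<ge> E0 / (64*S2) * w\<^sup>2"
    proof -
      have "3/(16*S2) \<ge> 1/(64*S2)" using S2p by (simp add: frac_le)
      hence "3/(16*S2) * w\<^sup>2 \<ge> 1/(64*S2) * w\<^sup>2" by (intro mult_right_mono) auto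
      hence "E0 * (3/(16*S2) * w\<^sup>2) \<ge> E0 * (1/(64*S2) * w\<^sup>2)" using E0p by (intro mult_left_mono) auto
      thus ?thesis by simp
    qed
    ultimately show ?thesis by (simp add: E0_def)
  qed
qed

lemma D1_ray:
  assumes S2: "S2 > 0" and \<tau>: "\<tau> \<ge> 1"
  shows "\<tau> * D1 S2 Q t0 w \<le> D1 S2 Q t0 (\<tau> * w)"
proof -
  define p where "p = t0 + w"
  define gp where "gp = gradE S2 Q p"
  define s0 where "s0 = gradE S2 Q t0"
  have a: "EE S2 Q p + gp * ((\<tau> - 1)*w) \<le> EE S2 Q (t0 + \<tau>*w)"
    using support[OF S2, of Q p "t0 + \<tau>*w"] by (simp add: gp_def p_def algebra_simps)
  have b: "EE S2 Q p + gp * (- w) \<le> EE S2 Q t0"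
    using support[OF S2, of Q p t0] by (simp add: gp_def p_def algebra_simps)
  have "gp * w - s0 * w \<ge> D1 S2 Q t0 w" using b by (simp add: D1_def s0_def p_def algebra_simps)
  hence "(\<tau> - 1) * (gp * w - s0 * w) \<ge> (\<tau> - 1) * D1 S2 Q t0 w"
    using \<tau> by (intro mult_left_mono) auto
  moreover have "D1 S2 Q t0 (\<tau> * w) \<ge> D1 S2 Q t0 w + (\<tau> - 1) * (gp * w - s0 * w)"
    using a by (simp add: D1_def s0_def p_def algebra_simps)
  ultimately show ?thesis by (simp add: algebra_simps)
qed

lemma D1_global:
  fixes Q :: real
  assumes S2: "S2 \<ge> 1" and t0: "t0 \<ge> 0"
  defines "c \<equiv> EE S2 Q t0 / (64*S2)"
  shows "c > 0" and "\<bar>w\<bar> \<le> 1 \<Longrightarrow> c * w\<^sup>2 \<le> D1 S2 Q t0 w"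
    and "\<bar>w\<bar> \<ge> 1 \<Longrightarrow> c * \<bar>w\<bar> \<le> D1 S2 Q t0 w"
proof -
  show "c > 0" using S2 by (simp add: c_def EE_pos)
  show "\<bar>w\<bar> \<le> 1 \<Longrightarrow> c * w\<^sup>2 \<le> D1 S2 Q t0 w" using D1_local[OF S2 t0] by (simp add: c_def)
  assume w: "\<bar>w\<bar> \<ge> 1"
  define u where "u = w / \<bar>w\<bar>"
  have u1: "\<bar>u\<bar> = 1" using w by (simp add: u_def)
  have "c * u\<^sup>2 \<le> D1 S2 Q t0 u" using D1_local[OF S2 t0, of u Q] u1 by (simp add: c_def)
  hence "c \<le> D1 S2 Q t0 u" using u1 by (simp add: power2_eq_square abs_mult_self_eq[of u, symmetric])
  hence "\<bar>w\<bar> * c \<le> \<bar>w\<bar> * D1 S2 Q t0 u" by (intro mult_left_mono) auto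
  also have "\<dots> \<le> D1 S2 Q t0 (\<bar>w\<bar> * u)" by (rule D1_ray) (use S2 w in auto)
  also have "\<bar>w\<bar> * u = w" using w by (simp add: u_def)
  finally show "c * \<bar>w\<bar> \<le> D1 S2 Q t0 w" by (simp add: mult.commute)
qed


lemma EE_norm: "EE S2 Q (norm \<theta>) = EE S2 Q (\<theta>::'v::real_normed_vector)"
  by (simp add: EE_def)

lemma norm_gradE:
  assumes "S2 > 0"
  shows "norm (gradE S2 Q (\<theta>::'v::real_normed_vector)) = gradE S2 Q (norm \<theta>)"
  using assms by (auto simp: gradE_def bb_def EE_def abs_mult)

lemma inner_gradE:
  assumes "S2 > 0"
  shows "\<theta> \<bullet> gradE S2 Q \<theta> = norm \<theta> * norm (gradE S2 Q (\<theta>::'v::real_inner))"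
proof -
  have "\<theta> \<bullet> gradE S2 Q \<theta> = EE S2 Q \<theta> * (bb S2 \<theta> \<bullet> \<theta>)" by (simp add: gradE_def inner_commute)
  also have "\<dots> = EE S2 Q \<theta> * (norm (bb S2 \<theta>) * norm \<theta>)" by (simp add: bb_inner[OF assms])
  also have "\<dots> = norm \<theta> * norm (gradE S2 Q \<theta>)"
    by (simp add: gradE_def abs_mult EE_pos less_imp_le)
  finally show ?thesis .
qed

lemma quad_deriv:
  fixes f :: "'a::real_normed_vector \<Rightarrow> real"
  assumes L: "bounded_linear L" and c: "c > 0" and K: "K > 0"
    and b: "\<And>y. norm (y - y0) \<le> c \<Longrightarrow> \<bar>f y - f y0 - L (y - y0)\<bar> \<le> K * (norm (y - y0))\<^sup>2"
  shows "(f has_derivative L) (at y0)"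
  unfolding has_derivative_at_alt
proof (intro conjI allI impI)
  show "bounded_linear L" by (rule L)
  fix e :: real assume e: "e > 0"
  show "\<exists>d>0. \<forall>y. norm (y - y0) < d \<longrightarrow> norm (f y - f y0 - L (y - y0)) \<le> e * norm (y - y0)"
  proof (intro exI[of _ "min c (e/K)"] conjI allI impI)
    show "min c (e/K) > 0" using c e K by simp
    fix y assume y: "norm (y - y0) < min c (e/K)"
    have "\<bar>f y - f y0 - L (y - y0)\<bar> \<le> K * (norm (y - y0))\<^sup>2" using b y by simp
    also have "\<dots> = (K * norm (y - y0)) * norm (y - y0)" by (simp add: power2_eq_square)
    also have "\<dots> \<le> e * norm (y - y0)"
    proof (intro mult_right_mono)
      have "norm (y - y0) \<le> e/K" using y by simp
      thus "K * norm (y - y0) \<le> e" using K by (simp add: field_simps)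
    qed simp
    finally show "norm (f y - f y0 - L (y - y0)) \<le> e * norm (y - y0)" by simp
  qed
qed

lemma psi_local:
  fixes Q :: real
  assumes S2: "S2 \<ge> 1" and t0: "t0 \<ge> 0"
  defines "c \<equiv> EE S2 Q t0 / (64*S2)" and "s0 \<equiv> gradE S2 Q t0"
  assumes h: "\<bar>h\<bar> \<le> c"
  shows "t0 * h \<le> psi (s0 + h) (sqrt S2) Q - psi s0 (sqrt S2) Q"
    and "psi (s0 + h) (sqrt S2) Q - psi s0 (sqrt S2) Q - t0 * h \<le> h\<^sup>2 / (4*c)"
proof -
  have S2p: "S2 > 0" using S2 by simp
  have c0: "c > 0" and cq: "\<And>w. \<bar>w\<bar> \<le> 1 \<Longrightarrow> c * w\<^sup>2 \<le> D1 S2 Q t0 w"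
    and cl: "\<And>w. \<bar>w\<bar> \<ge> 1 \<Longrightarrow> c * \<bar>w\<bar> \<le> D1 S2 Q t0 w"
    using D1_global[OF S2 t0, where Q=Q] by (auto simp: c_def)
  have fe: "psi s0 (sqrt S2) Q = t0 * s0 - EE S2 Q t0"
    using fenchel_eq[OF S2p] by (simp add: s0_def)
  have "t0 * (s0 + h) - EE S2 Q t0 \<le> psi (s0 + h) (sqrt S2) Q" by (rule fenchel_young[OF S2p])
  thus "t0 * h \<le> psi (s0 + h) (sqrt S2) Q - psi s0 (sqrt S2) Q" using fe by (simp add: algebra_simps)
  have "(SUP t::real. t * (s0 + h) - EE S2 Q t) \<le> t0 * s0 - EE S2 Q t0 + t0 * h + h\<^sup>2 / (4*c)"
  proof (rule cSUP_least)
    fix t :: real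
    define w where "w = t - t0"
    have eq: "t * (s0 + h) - EE S2 Q t = (t0 * s0 - EE S2 Q t0) + t0 * h + (w * h - D1 S2 Q t0 w)"
      by (simp add: w_def D1_def s0_def algebra_simps)
    have "w * h - D1 S2 Q t0 w \<le> h\<^sup>2 / (4*c)"
    proof (cases "\<bar>w\<bar> \<le> 1")
      case True
      have "w * h - c * w\<^sup>2 \<le> h\<^sup>2 / (4*c)"
      proof -
        have "0 \<le> (2*c*w - h)\<^sup>2 / (4*c)" using c0 by simp
        also have "(2*c*w - h)\<^sup>2 / (4*c) = h\<^sup>2 / (4*c) - (w * h - c * w\<^sup>2)"
          using c0 by (simp add: field_simps power2_eq_square)
        finally show ?thesis by simp
      qed
      thus ?thesis using cq[OF True] by linarith
    next
      case False
      have "w * h \<le> \<bar>w\<bar> * \<bar>h\<bar>" by (simp add: abs_mult[symmetric])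
      also have "\<dots> \<le> \<bar>w\<bar> * c" using h by (intro mult_left_mono) auto
      also have "\<dots> \<le> D1 S2 Q t0 w" using cl[of w] False by (simp add: mult.commute)
      finally have "w * h - D1 S2 Q t0 w \<le> 0" by simp
      moreover have "0 \<le> h\<^sup>2 / (4*c)" using c0 by simp
      ultimately show ?thesis by linarith
    qed
    thus "t * (s0 + h) - EE S2 Q t \<le> t0 * s0 - EE S2 Q t0 + t0 * h + h\<^sup>2 / (4*c)"
      using eq by linarith
  qed simp
  thus "psi (s0 + h) (sqrt S2) Q - psi s0 (sqrt S2) Q - t0 * h \<le> h\<^sup>2 / (4*c)"
    using fe psi_eq[OF S2p] by simp
qed

lemma psi_deriv:
  assumes S2: "S2 \<ge> 1" and t0: "t0 \<ge> 0"
  shows "((\<lambda>s. psi s (sqrt S2) Q) has_real_derivative t0) (at (gradE S2 Q t0))"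
proof -
  define c where "c = EE S2 Q t0 / (64*S2)"
  define s0 where "s0 = gradE S2 Q t0"
  have c0: "c > 0" using S2 by (simp add: c_def EE_pos)
  have "((\<lambda>s. psi s (sqrt S2) Q) has_derivative (\<lambda>h. t0 * h)) (at s0)"
  proof (rule quad_deriv[OF bounded_linear_mult_right c0])
    show "1/(4*c) > 0" using c0 by simp
    fix y assume y: "norm (y - s0) \<le> c"
    define h where "h = y - s0"
    have hc: "\<bar>h\<bar> \<le> c" using y by (simp add: h_def)
    have l1: "t0 * h \<le> psi (s0 + h) (sqrt S2) Q - psi s0 (sqrt S2) Q"
      and l2: "psi (s0 + h) (sqrt S2) Q - psi s0 (sqrt S2) Q - t0 * h \<le> h\<^sup>2 / (4*c)"
      using psi_local[OF S2 t0, of h Q] hc by (simp_all add: c_def s0_def)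
    have "y = s0 + h" by (simp add: h_def)
    thus "\<bar>psi y (sqrt S2) Q - psi s0 (sqrt S2) Q - t0 * (y - s0)\<bar> \<le> 1/(4*c) * (norm (y - s0))\<^sup>2"
      using l1 l2 c0 by (simp add: h_def)
  qed
  thus ?thesis unfolding has_field_derivative_def s0_def by (simp add: mult_commute_abs)
qed

lemma phi_deriv:
  fixes \<theta> :: "'v::real_inner"
  assumes S2: "S2 \<ge> 1"
  shows "((\<lambda>y. psi (norm y) (sqrt S2) Q) has_derivative (\<lambda>h. \<theta> \<bullet> h)) (at (gradE S2 Q \<theta>))"
proof (cases "\<theta> = 0")
  case True
  have S2p: "S2 > 0" using S2 by simp
  have g0: "gradE S2 Q \<theta> = 0" using True by (simp add: gradE_def bb_def)
  have g0': "gradE S2 Q (0::real) = 0" by (simp add: gradE_def bb_def)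
  define c where "c = EE S2 Q (0::real) / (64*S2)"
  have c0: "c > 0" using S2 by (simp add: c_def EE_pos)
  have "((\<lambda>y. psi (norm y) (sqrt S2) Q) has_derivative (\<lambda>h. 0)) (at (0::'v))"
  proof (rule quad_deriv[OF bounded_linear_zero c0])
    show "1/(4*c) > 0" using c0 by simp
    fix y :: 'v assume y: "norm (y - 0) \<le> c"
    define h where "h = norm y"
    have hc: "\<bar>h\<bar> \<le> c" using y by (simp add: h_def)
    have l1: "0 * h \<le> psi (0 + h) (sqrt S2) Q - psi 0 (sqrt S2) Q"
      and l2: "psi (0 + h) (sqrt S2) Q - psi 0 (sqrt S2) Q - 0 * h \<le> h\<^sup>2 / (4*c)"
      using psi_local[OF S2 order_refl, of h Q] hc by (simp_all add: c_def g0')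
    thus "\<bar>psi (norm y) (sqrt S2) Q - psi (norm (0::'v)) (sqrt S2) Q - 0\<bar> \<le> 1/(4*c) * (norm (y - 0))\<^sup>2"
      using c0 by (simp add: h_def)
  qed
  thus ?thesis by (simp add: True gradE_def bb_def)
next
  case False
  have S2p: "S2 > 0" using S2 by simp
  define y0 where "y0 = gradE S2 Q \<theta>"
  define r where "r = norm \<theta>"
  have r0: "r > 0" using False by (simp add: r_def)
  define k where "k = EE S2 Q \<theta> * (if norm \<theta> \<le> S2 then 1/(2*S2) else 1/(2*norm \<theta>))"
  have k0: "k > 0" using S2p r0 by (simp add: k_def EE_pos r_def)
  have y0k: "y0 = k *\<^sub>R \<theta>" by (simp add: y0_def gradE_def bb_def k_def)
  have y0ne: "y0 \<noteq> 0" using k0 False by (simp add: y0k)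
  have ny0: "norm y0 = gradE S2 Q r" using norm_gradE[OF S2p] by (simp add: y0_def r_def)
  have d1: "(norm has_derivative (\<lambda>h. h \<bullet> sgn y0)) (at y0)" by (rule has_derivative_norm[OF y0ne])
  have d2: "((\<lambda>s. psi s (sqrt S2) Q) has_derivative (\<lambda>h. r * h)) (at (norm y0))"
    using psi_deriv[OF S2, of r Q] r0 ny0 by (simp add: has_field_derivative_def)
  have "((\<lambda>y. psi (norm y) (sqrt S2) Q) has_derivative (\<lambda>h. r * (h \<bullet> sgn y0))) (at y0)"
    using has_derivative_compose[OF d1 d2] .
  moreover have "(\<lambda>h. r * (h \<bullet> sgn y0)) = (\<lambda>h. \<theta> \<bullet> h)"
  proof
    fix h
    have "sgn y0 = (1/r) *\<^sub>R \<theta>" using k0 r0 by (simp add: y0k sgn_div_norm r_def field_simps)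
    thus "r * (h \<bullet> sgn y0) = \<theta> \<bullet> h" using r0 by (simp add: inner_commute)
  qed
  ultimately show ?thesis by (simp add: y0_def)
qed

lemma bregman_formula:
  fixes \<theta> xs :: "'v::euclidean_space"
  assumes S2: "S2 \<ge> 1"
  shows "bregman (\<lambda>y. psi (norm y) (sqrt S2) Q) xs (gradE S2 Q \<theta>)
       = psi (norm xs) (sqrt S2) Q + EE S2 Q \<theta> - \<theta> \<bullet> xs"
proof -
  have S2p: "S2 > 0" using S2 by simp
  let ?f = "\<lambda>y. psi (norm y) (sqrt S2) Q"
  let ?y0 = "gradE S2 Q \<theta>"
  have d: "(?f has_derivative (\<lambda>h. \<theta> \<bullet> h)) (at ?y0)" by (rule phi_deriv[OF S2])
  have the: "(THE v. (?f has_derivative (\<lambda>h. v \<bullet> h)) (at ?y0)) = \<theta>"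
  proof (rule the_equality)
    show "(?f has_derivative (\<lambda>h. \<theta> \<bullet> h)) (at ?y0)" by (rule d)
  next
    fix v assume "(?f has_derivative (\<lambda>h. v \<bullet> h)) (at ?y0)"
    hence eq: "(\<lambda>h. v \<bullet> h) = (\<lambda>h. \<theta> \<bullet> h)" using has_derivative_unique d by blast
    have "(v - \<theta>) \<bullet> (v - \<theta>) = 0" using fun_cong[OF eq, of "v - \<theta>"] by (simp add: inner_diff_left)
    thus "v = \<theta>" by simp
  qed
  have fy0: "?f ?y0 = \<theta> \<bullet> ?y0 - EE S2 Q \<theta>"
  proof -
    have "?f ?y0 = psi (gradE S2 Q (norm \<theta>)) (sqrt S2) Q" by (simp add: norm_gradE[OF S2p])
    also have "\<dots> = norm \<theta> * gradE S2 Q (norm \<theta>) - EE S2 Q (norm \<theta>)" by (rule fenchel_eq[OF S2p])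
    also have "\<dots> = \<theta> \<bullet> ?y0 - EE S2 Q \<theta>"
      by (simp add: inner_gradE[OF S2p] norm_gradE[OF S2p] EE_norm)
    finally show ?thesis .
  qed
  show ?thesis unfolding bregman_def the fy0 by (simp add: inner_diff_right)
qed


definition SS :: "(nat \<Rightarrow> 'v::real_normed_vector) \<Rightarrow> (nat \<Rightarrow> real) \<Rightarrow> nat \<Rightarrow> real" where
  "SS gg ee t = fst (alg_state gg ee t)"
definition QQ :: "(nat \<Rightarrow> 'v::real_normed_vector) \<Rightarrow> (nat \<Rightarrow> real) \<Rightarrow> nat \<Rightarrow> real" where
  "QQ gg ee t = fst (snd (alg_state gg ee t))"
definition TT :: "(nat \<Rightarrow> 'v::real_normed_vector) \<Rightarrow> (nat \<Rightarrow> real) \<Rightarrow> nat \<Rightarrow> 'v" where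
  "TT gg ee t = snd (snd (alg_state gg ee t))"
definition ll :: "(nat \<Rightarrow> 'v::real_normed_vector) \<Rightarrow> (nat \<Rightarrow> real) \<Rightarrow> nat \<Rightarrow> 'v" where
  "ll gg ee t = ee t *\<^sub>R gg t"

lemma state_eq: "alg_state gg ee t = (SS gg ee t, QQ gg ee t, TT gg ee t)"
  by (simp add: SS_def QQ_def TT_def)

lemma SS_0[simp]: "SS gg ee 0 = 4" and QQ_0[simp]: "QQ gg ee 0 = 0" and TT_0[simp]: "TT gg ee 0 = 0"
  by (simp_all add: SS_def QQ_def TT_def)

lemma state_Suc:
  "SS gg ee (Suc t) = SS gg ee t + (norm (ll gg ee (Suc t)))\<^sup>2"
  "QQ gg ee (Suc t) = QQ gg ee t + (norm (ll gg ee (Suc t)))\<^sup>2 / SS gg ee (Suc t)"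
  "TT gg ee (Suc t) = TT gg ee t - ll gg ee (Suc t)"
proof -
  have e: "alg_state gg ee (Suc t) = (SS gg ee t + (norm (ll gg ee (Suc t)))\<^sup>2,
      QQ gg ee t + (norm (ll gg ee (Suc t)))\<^sup>2 / (SS gg ee t + (norm (ll gg ee (Suc t)))\<^sup>2),
      TT gg ee t - ll gg ee (Suc t))"
    by (simp add: state_eq[of gg ee t] Let_def ll_def)
  show "SS gg ee (Suc t) = SS gg ee t + (norm (ll gg ee (Suc t)))\<^sup>2"
    by (subst SS_def, subst e) simp
  show "TT gg ee (Suc t) = TT gg ee t - ll gg ee (Suc t)"
    by (subst TT_def, subst e) simp
  show "QQ gg ee (Suc t) = QQ gg ee t + (norm (ll gg ee (Suc t)))\<^sup>2 / SS gg ee (Suc t)"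
    by (subst QQ_def, subst SS_def, subst e, subst e) simp
qed

lemma SS_ge4: "SS gg ee t \<ge> 4"
  by (induction t) (auto simp: state_Suc intro: add_increasing2)

lemma SS_pos: "SS gg ee t > 0" using SS_ge4[of gg ee t] by simp

lemma QQ_nonneg: "QQ gg ee t \<ge> 0"
  by (induction t) (auto simp: state_Suc SS_pos less_imp_le intro!: add_nonneg_nonneg divide_nonneg_pos)

lemma SS_mono: "SS gg ee t \<le> SS gg ee (Suc t)" by (simp add: state_Suc)

lemma QQ_mono: "QQ gg ee t \<le> QQ gg ee (Suc t)"
  by (simp add: state_Suc SS_pos less_imp_le divide_nonneg_pos)

lemma SS_sum: "SS gg ee t = 4 + (\<Sum>i<t. (norm (ll gg ee (Suc i)))\<^sup>2)"
  by (induction t) (simp_all add: state_Suc)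

lemma QQ_sum: "QQ gg ee t \<le> (\<Sum>i<t. (norm (ll gg ee (Suc i)))\<^sup>2) / 4"
proof (induction t)
  case 0 show ?case by simp
next
  case (Suc t)
  have "(norm (ll gg ee (Suc t)))\<^sup>2 / SS gg ee (Suc t) \<le> (norm (ll gg ee (Suc t)))\<^sup>2 / 4"
    using SS_ge4[of gg ee "Suc t"] by (intro divide_left_mono) auto
  thus ?case using Suc.IH by (simp only: state_Suc(2) sum.lessThan_Suc add_divide_distrib)
qed

lemma TT_bound: "norm (TT gg ee t) \<le> (\<Sum>i<t. norm (ll gg ee (Suc i)))"
proof (induction t)
  case 0 show ?case by simp
next
  case (Suc t)
  have "norm (TT gg ee (Suc t)) \<le> norm (TT gg ee t) + norm (ll gg ee (Suc t))"
    by (simp add: state_Suc norm_triangle_ineq4)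
  thus ?case using Suc.IH by simp
qed

lemma alg_x_eq: "alg_x gg ee t = gradE (SS gg ee (t-1)) (QQ gg ee (t-1)) (TT gg ee (t-1))"
proof -
  let ?S = "SS gg ee (t-1)" and ?Q = "QQ gg ee (t-1)" and ?T = "TT gg ee (t-1)"
  have Sp: "?S > 0" by (rule SS_pos)
  show ?thesis
  proof (cases "norm ?T \<le> ?S")
    case True
    have "alg_x gg ee t = (exp ((norm ?T)\<^sup>2 / (4 * ?S) - ?Q) / (2 * ?S)) *\<^sub>R ?T"
      using True by (simp add: alg_x_def state_eq)
    moreover have "gradE ?S ?Q ?T = (exp ((norm ?T)\<^sup>2 / (4 * ?S) - ?Q) / (2 * ?S)) *\<^sub>R ?T"
      using True by (simp add: gradE_def EE_def bb_def mm_def)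
    ultimately show ?thesis by simp
  next
    case False
    have "alg_x gg ee t = (exp (norm ?T / 2 - ?S / 4 - ?Q) / (2 * norm ?T)) *\<^sub>R ?T"
      using False by (simp add: alg_x_def state_eq)
    moreover have "gradE ?S ?Q ?T = (exp (norm ?T / 2 - ?S / 4 - ?Q) / (2 * norm ?T)) *\<^sub>R ?T"
      using False by (simp add: gradE_def EE_def bb_def mm_def)
    ultimately show ?thesis by simp
  qed
qed

lemma alg_phi_eq: "alg_phi gg ee t = (\<lambda>y. psi (norm y) (sqrt (SS gg ee (t-1))) (QQ gg ee (t-1)))"
  by (simp add: alg_phi_def state_eq fun_eq_iff)

definition CC :: "(nat \<Rightarrow> 'v::real_inner) \<Rightarrow> (nat \<Rightarrow> real) \<Rightarrow> 'v \<Rightarrow> nat \<Rightarrow> real" where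
  "CC gg ee xs k = psi (norm xs) (sqrt (SS gg ee k)) (QQ gg ee k)"
definition YY :: "(nat \<Rightarrow> 'v::real_inner) \<Rightarrow> (nat \<Rightarrow> real) \<Rightarrow> 'v \<Rightarrow> nat \<Rightarrow> real" where
  "YY gg ee xs k = EE (SS gg ee k) (QQ gg ee k) (TT gg ee k) - TT gg ee k \<bullet> xs"

lemma bregman_alg:
  fixes gg :: "nat \<Rightarrow> 'v::euclidean_space"
  shows "bregman (alg_phi gg ee t) xs (alg_x gg ee t) = CC gg ee xs (t-1) + YY gg ee xs (t-1)"
proof -
  have S1: "SS gg ee (t-1) \<ge> 1" using SS_ge4[of gg ee "t-1"] by simp
  show ?thesis unfolding alg_phi_eq alg_x_eq bregman_formula[OF S1] CC_def YY_def by simp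
qed

lemma YY_step:
  fixes gg :: "nat \<Rightarrow> 'v::real_inner"
  assumes l1: "norm (ll gg ee (Suc k)) \<le> 1"
  shows "YY gg ee xs (Suc k) \<le> YY gg ee xs k - ll gg ee (Suc k) \<bullet> (alg_x gg ee (Suc k) - xs)"
proof -
  define S where "S = SS gg ee k"
  define Q where "Q = QQ gg ee k"
  define T where "T = TT gg ee k"
  define l where "l = ll gg ee (Suc k)"
  have e1: "SS gg ee (Suc k) = S + (norm l)\<^sup>2" by (simp add: S_def l_def state_Suc(1))
  have e2: "QQ gg ee (Suc k) = Q + (norm l)\<^sup>2 / (S + (norm l)\<^sup>2)"
    by (simp only: Q_def l_def S_def state_Suc(2) state_Suc(1)[symmetric])
  have e3: "TT gg ee (Suc k) = T - l" by (simp add: T_def l_def state_Suc(3))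
  have ax: "alg_x gg ee (Suc k) = gradE S Q T" by (simp add: alg_x_eq S_def Q_def T_def)
  have p: "EE (S + (norm l)\<^sup>2) (Q + (norm l)\<^sup>2 / (S + (norm l)\<^sup>2)) (T - l) \<le> EE S Q T - l \<bullet> gradE S Q T"
    by (rule potential) (use l1 SS_pos in \<open>auto simp: S_def l_def\<close>)
  have "YY gg ee xs (Suc k) = EE (S + (norm l)\<^sup>2) (Q + (norm l)\<^sup>2 / (S + (norm l)\<^sup>2)) (T - l) - (T - l) \<bullet> xs"
    by (simp only: YY_def e1 e2 e3)
  also have "\<dots> \<le> EE S Q T - l \<bullet> gradE S Q T - (T - l) \<bullet> xs" using p by linarith
  also have "\<dots> = YY gg ee xs k - l \<bullet> (gradE S Q T - xs)"
    by (simp add: YY_def S_def Q_def T_def inner_diff_left inner_diff_right)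
  finally show ?thesis by (simp add: ax l_def)
qed

lemma YY_lower:
  fixes gg :: "nat \<Rightarrow> 'v::real_inner"
  shows "- CC gg ee xs k \<le> YY gg ee xs k"
proof -
  let ?S = "SS gg ee k" and ?Q = "QQ gg ee k" and ?T = "TT gg ee k"
  have "norm ?T * norm xs - EE ?S ?Q (norm ?T) \<le> psi (norm xs) (sqrt ?S) ?Q"
    by (rule fenchel_young[OF SS_pos])
  moreover have "?T \<bullet> xs \<le> norm ?T * norm xs" by (rule norm_cauchy_schwarz)
  ultimately show ?thesis by (simp add: CC_def YY_def EE_norm)
qed

lemma mm_anti:
  assumes "0 < S2" "S2 \<le> S2'" "0 \<le> r"
  shows "mm S2' r \<le> mm S2 r"
proof -
  have S2': "S2' > 0" using assms by simp
  have "mm S2' r = bb S2' r * r - (bb S2' r)\<^sup>2 * S2'" using bb_value[OF S2', of r] assms(3) by simp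
  also have "\<dots> \<le> bb S2' r * r - (bb S2' r)\<^sup>2 * S2" using assms by (simp add: mult_left_mono)
  also have "\<dots> \<le> mm S2 (norm r)" using mm_lower[OF norm_bb_le[OF S2'] assms(1), of r r] by simp
  finally show ?thesis using assms(3) by simp
qed

lemma psi_mono:
  assumes "0 < S2" "S2 \<le> S2'" "Q \<le> Q'"
  shows "psi s (sqrt S2) Q \<le> psi s (sqrt S2') Q'"
proof -
  have S2': "S2' > 0" using assms by simp
  have "(SUP t::real. t * s - EE S2 Q t) \<le> (SUP t::real. t * s - EE S2' Q' t)"
  proof (rule cSUP_mono)
    show "bdd_above (range (\<lambda>t::real. t * s - EE S2' Q' t))" by (rule psi_bdd[OF S2'])
    fix t :: real
    have "EE S2' Q' t \<le> EE S2 Q t"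
      using mm_anti[OF assms(1,2), of "\<bar>t\<bar>"] assms(3) by (simp add: EE_real_norm)
    thus "\<exists>m\<in>UNIV. t * s - EE S2 Q t \<le> m * s - EE S2' Q' m" by (intro bexI[of _ t]) auto
  qed simp
  thus ?thesis using psi_eq[OF assms(1)] psi_eq[OF S2'] by simp
qed

lemma CC_mono: "CC gg ee xs k \<le> CC gg ee xs (Suc k)"
  unfolding CC_def by (rule psi_mono[OF SS_pos SS_mono QQ_mono])

lemma CC_upper: "CC gg ee xs k \<le> (norm xs)\<^sup>2 * 2 * exp (SS gg ee k / 4 + QQ gg ee k)"
  unfolding CC_def by (rule psi_upper_bound[OF SS_pos])


lemma mm_alt: "S2 > 0 \<Longrightarrow> mm S2 r = (r\<^sup>2 - (max (r - S2) 0)\<^sup>2) / (4*S2)"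
  by (auto simp: mm_def max_def field_simps power2_eq_square)

lemma EE_meas[measurable]:
  fixes S Q :: "'a \<Rightarrow> real" and T :: "'a \<Rightarrow> 'v::euclidean_space"
  assumes [measurable]: "S \<in> borel_measurable N" "Q \<in> borel_measurable N" "T \<in> borel_measurable N"
  shows "(\<lambda>\<omega>. EE (S \<omega>) (Q \<omega>) (T \<omega>)) \<in> borel_measurable N"
  unfolding EE_def mm_def by measurable

lemma gradE_meas[measurable]:
  fixes S Q :: "'a \<Rightarrow> real" and T :: "'a \<Rightarrow> 'v::euclidean_space"
  assumes [measurable]: "S \<in> borel_measurable N" "Q \<in> borel_measurable N" "T \<in> borel_measurable N"
  shows "(\<lambda>\<omega>. gradE (S \<omega>) (Q \<omega>) (T \<omega>)) \<in> borel_measurable N"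
  unfolding gradE_def bb_def by measurable

lemma state_meas:
  fixes g :: "nat \<Rightarrow> 'a \<Rightarrow> 'v::euclidean_space" and eta :: "nat \<Rightarrow> 'a \<Rightarrow> real"
  assumes g: "\<And>i. 1 \<le> i \<Longrightarrow> i \<le> k \<Longrightarrow> g i \<in> borel_measurable N"
    and e: "\<And>i. 1 \<le> i \<Longrightarrow> i \<le> k \<Longrightarrow> eta i \<in> borel_measurable N"
  shows "(\<lambda>\<omega>. SS (\<lambda>s. g s \<omega>) (\<lambda>s. eta s \<omega>) k) \<in> borel_measurable N \<and>
         (\<lambda>\<omega>. QQ (\<lambda>s. g s \<omega>) (\<lambda>s. eta s \<omega>) k) \<in> borel_measurable N \<and>
         (\<lambda>\<omega>. TT (\<lambda>s. g s \<omega>) (\<lambda>s. eta s \<omega>) k) \<in> borel_measurable N"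
  using g e
proof (induction k)
  case 0 thus ?case by simp
next
  case (Suc k)
  have ih: "(\<lambda>\<omega>. SS (\<lambda>s. g s \<omega>) (\<lambda>s. eta s \<omega>) k) \<in> borel_measurable N"
     "(\<lambda>\<omega>. QQ (\<lambda>s. g s \<omega>) (\<lambda>s. eta s \<omega>) k) \<in> borel_measurable N"
     "(\<lambda>\<omega>. TT (\<lambda>s. g s \<omega>) (\<lambda>s. eta s \<omega>) k) \<in> borel_measurable N"
    using Suc by auto
  note [measurable] = ih
  have [measurable]: "g (Suc k) \<in> borel_measurable N" "eta (Suc k) \<in> borel_measurable N" using Suc.prems by auto
  have l[measurable]: "(\<lambda>\<omega>. ll (\<lambda>s. g s \<omega>) (\<lambda>s. eta s \<omega>) (Suc k)) \<in> borel_measurable N"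
    unfolding ll_def by measurable
  have s[measurable]: "(\<lambda>\<omega>. SS (\<lambda>s. g s \<omega>) (\<lambda>s. eta s \<omega>) (Suc k)) \<in> borel_measurable N"
    unfolding state_Suc(1) by measurable
  show ?case unfolding state_Suc(2) state_Suc(3) using s by measurable
qed

lemma SUP_rat:
  fixes f :: "real \<Rightarrow> real"
  assumes c: "continuous_on UNIV f" and b: "bdd_above (range f)"
  shows "(SUP t. f t) = (SUP t\<in>\<rat>. f t)"
proof (rule antisym)
  have bq: "bdd_above (f ` \<rat>)" using b by (meson bdd_above_mono image_mono subset_UNIV)
  have ne: "\<rat> \<noteq> {}" using Rats_0 by blast
  show "(SUP t\<in>\<rat>. f t) \<le> (SUP t. f t)" by (rule cSUP_subset_mono) (use b ne in auto)
  have "f ` closure \<rat> \<subseteq> {..(SUP t\<in>\<rat>. f t)}"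
  proof (rule image_closure_subset)
    show "continuous_on (closure \<rat>) f" using c by (rule continuous_on_subset) simp
    show "closed {..(SUP t\<in>\<rat>. f t)}" by simp
    show "f ` \<rat> \<subseteq> {..(SUP t\<in>\<rat>. f t)}" using bq by (auto intro: cSUP_upper)
  qed
  hence "\<And>t. f t \<le> (SUP t\<in>\<rat>. f t)" using Rats_closure_real by auto
  thus "(SUP t. f t) \<le> (SUP t\<in>\<rat>. f t)" by (intro cSUP_least) auto
qed

lemma psi_meas[measurable]:
  fixes S Q :: "'a \<Rightarrow> real"
  assumes [measurable]: "S \<in> borel_measurable N" "Q \<in> borel_measurable N"
    and Sp: "\<And>\<omega>. S \<omega> > 0"
  shows "(\<lambda>\<omega>. psi s (sqrt (S \<omega>)) (Q \<omega>)) \<in> borel_measurable N"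
proof -
  have e: "psi s (sqrt (S \<omega>)) (Q \<omega>) = (SUP t\<in>\<rat>. t * s - EE (S \<omega>) (Q \<omega>) t)" for \<omega>
  proof -
    have "psi s (sqrt (S \<omega>)) (Q \<omega>) = (SUP t::real. t * s - EE (S \<omega>) (Q \<omega>) t)" by (rule psi_eq[OF Sp])
    also have "\<dots> = (SUP t\<in>\<rat>. t * s - EE (S \<omega>) (Q \<omega>) t)"
    proof (rule SUP_rat)
      show "bdd_above (range (\<lambda>t. t * s - EE (S \<omega>) (Q \<omega>) t))" by (rule psi_bdd[OF Sp])
      show "continuous_on UNIV (\<lambda>t. t * s - EE (S \<omega>) (Q \<omega>) t)"
        unfolding EE_def mm_alt[OF Sp] using Sp[of \<omega>] by (intro continuous_intros) auto
    qed
    finally show ?thesis .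
  qed
  show ?thesis unfolding e
  proof (rule borel_measurable_cSUP)
    show "countable \<rat>" by (rule countable_rat)
    fix t :: real
    show "(\<lambda>\<omega>. t * s - EE (S \<omega>) (Q \<omega>) t) \<in> borel_measurable N"
      by (intro borel_measurable_diff borel_measurable_const EE_meas) auto
  next
    fix \<omega> show "bdd_above ((\<lambda>t. t * s - EE (S \<omega>) (Q \<omega>) t) ` \<rat>)"
      using psi_bdd[OF Sp, where s=s and Q="Q \<omega>"] by (meson bdd_above_mono image_mono subset_UNIV)
  qed
qed

lemma Fs_space: "space (alg_filtration M x g t) = space M"
  unfolding alg_filtration_def by (rule space_measure_of_conv) 

lemma Fs_sets: "sets (alg_filtration M x g t) = sigma_sets (space M)
     ((\<Union>i\<in>{1..t}. {x i -` A \<inter> space M | A. A \<in> sets borel}) \<union>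
      (\<Union>i\<in>{1..<t}. {g i -` A \<inter> space M | A. A \<in> sets borel}))"
  unfolding alg_filtration_def by (rule sets_measure_of) auto

lemma Fs_sub:
  fixes x g :: "nat \<Rightarrow> 'a \<Rightarrow> 'v::euclidean_space"
  assumes "\<And>i. 1 \<le> i \<Longrightarrow> i \<le> t \<Longrightarrow> x i \<in> borel_measurable M"
    and "\<And>i. 1 \<le> i \<Longrightarrow> i < t \<Longrightarrow> g i \<in> borel_measurable M"
  shows "subalgebra M (alg_filtration M x g t)"
  unfolding subalgebra_def Fs_space Fs_sets
proof (intro conjI refl sets.sigma_sets_subset)
  show "(\<Union>i\<in>{1..t}. {x i -` A \<inter> space M | A. A \<in> sets borel}) \<union>
      (\<Union>i\<in>{1..<t}. {g i -` A \<inter> space M | A. A \<in> sets borel}) \<subseteq> sets M"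
    using assms by (auto intro: measurable_sets)
qed

lemma Fs_mono:
  fixes x g :: "nat \<Rightarrow> 'a \<Rightarrow> 'v::euclidean_space"
  assumes "t \<le> t'"
  shows "subalgebra (alg_filtration M x g t') (alg_filtration M x g t)"
  unfolding subalgebra_def Fs_space Fs_sets
  by (intro conjI refl sigma_sets_mono' Un_mono UN_mono) (use assms in auto)

lemma Fs_meas_x:
  fixes x g :: "nat \<Rightarrow> 'a \<Rightarrow> 'v::euclidean_space"
  assumes "1 \<le> i" "i \<le> t"
  shows "x i \<in> borel_measurable (alg_filtration M x g t)"
proof (rule measurableI)
  fix A :: "'v set" assume "A \<in> sets borel"
  hence "x i -` A \<inter> space M \<in> (\<Union>i\<in>{1..t}. {x i -` A \<inter> space M | A. A \<in> sets borel})"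
    using assms by (intro UN_I[of i]) auto
  thus "x i -` A \<inter> space (alg_filtration M x g t) \<in> sets (alg_filtration M x g t)"
    unfolding Fs_space Fs_sets by auto
qed simp

lemma Fs_meas_g:
  fixes x g :: "nat \<Rightarrow> 'a \<Rightarrow> 'v::euclidean_space"
  assumes "1 \<le> i" "i < t"
  shows "g i \<in> borel_measurable (alg_filtration M x g t)"
proof (rule measurableI)
  fix A :: "'v set" assume "A \<in> sets borel"
  hence "g i -` A \<inter> space M \<in> (\<Union>i\<in>{1..<t}. {g i -` A \<inter> space M | A. A \<in> sets borel})"
    using assms by (intro UN_I[of i]) auto
  thus "g i -` A \<inter> space (alg_filtration M x g t) \<in> sets (alg_filtration M x g t)"
    unfolding Fs_space Fs_sets by auto
qed simp


lemma mm_bound: assumes "S2 \<ge> 1" "0 \<le> r" shows "mm S2 r \<le> r\<^sup>2 + r"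
proof (cases "r \<le> S2")
  case True
  have "r\<^sup>2 / (4*S2) \<le> r\<^sup>2 / 1" using assms by (intro divide_left_mono) auto
  thus ?thesis using True assms by (simp add: mm_def)
next
  case False
  have a: "0 \<le> r\<^sup>2" by simp
  have b: "r/2 - S2/4 \<le> r" using assms by simp
  have "mm S2 r = r/2 - S2/4" using False by (simp add: mm_def)
  thus ?thesis using a b by linarith
qed

lemma EE_bound:
  assumes "S2 \<ge> 1" "0 \<le> Q" "norm T \<le> r"
  shows "EE S2 Q T \<le> exp (r\<^sup>2 + r)"
proof -
  have "mm S2 (norm T) \<le> (norm T)\<^sup>2 + norm T" by (rule mm_bound) (use assms in auto)
  also have "\<dots> \<le> r\<^sup>2 + r" using assms(3) by (intro add_mono power_mono) auto
  finally show ?thesis using assms(2) by (simp add: EE_def)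
qed

lemma gradE_bound: "S2 > 0 \<Longrightarrow> norm (gradE S2 Q T) \<le> EE S2 Q T"
  using norm_bb_le[of S2 T] by (auto simp: gradE_def EE_pos less_imp_le intro: mult_left_le)

lemma good_bounds:
  fixes gg :: "nat \<Rightarrow> 'v::euclidean_space" and xs :: 'v and \<gamma> :: real
  assumes l1: "\<And>t. t \<ge> 1 \<Longrightarrow> norm (ll gg ee t) \<le> 1"
    and ls: "\<And>k. (\<Sum>i<k. (norm (ll gg ee (Suc i)))\<^sup>2) \<le> \<gamma>"
  shows "SS gg ee k \<le> 4 + \<gamma>" and "QQ gg ee k \<le> \<gamma>/4" and "norm (TT gg ee k) \<le> k"
    and "CC gg ee xs k \<le> ((norm xs)\<^sup>2 * 2 * exp ((4 + \<gamma>)/4 + \<gamma>/4))" and "- ((norm xs)\<^sup>2 * 2 * exp ((4 + \<gamma>)/4 + \<gamma>/4)) \<le> YY gg ee xs k"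
    and "YY gg ee xs k \<le> exp ((real k)\<^sup>2 + real k) + real k * norm xs"
    and "norm (alg_x gg ee (Suc k)) \<le> exp ((real k)\<^sup>2 + real k)"
    and "convergent (CC gg ee xs)"
proof -
  define Kc where "Kc = (norm xs)\<^sup>2 * 2 * exp ((4 + \<gamma>)/4 + \<gamma>/4)"
  show S: "SS gg ee k \<le> 4 + \<gamma>" for k using ls[of k] by (simp add: SS_sum)
  show Q: "QQ gg ee k \<le> \<gamma>/4" for k using QQ_sum[of gg ee k] ls[of k] by simp
  show T: "norm (TT gg ee k) \<le> k" for k
  proof -
    have "norm (TT gg ee k) \<le> (\<Sum>i<k. norm (ll gg ee (Suc i)))" by (rule TT_bound)
    also have "\<dots> \<le> (\<Sum>i<k. 1)" by (intro sum_mono l1) simp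
    finally show ?thesis by simp
  qed
  have C: "CC gg ee xs k \<le> Kc" for k
  proof -
    have "CC gg ee xs k \<le> (norm xs)\<^sup>2 * 2 * exp (SS gg ee k / 4 + QQ gg ee k)" by (rule CC_upper)
    also have "\<dots> \<le> Kc"
    proof -
      have "SS gg ee k / 4 + QQ gg ee k \<le> (4 + \<gamma>)/4 + \<gamma>/4"
        by (intro add_mono divide_right_mono) (use S[of k] Q[of k] in auto)
      thus ?thesis unfolding Kc_def by (intro mult_left_mono) auto
    qed
    finally show ?thesis .
  qed
  show "- ((norm xs)\<^sup>2 * 2 * exp ((4 + \<gamma>)/4 + \<gamma>/4)) \<le> YY gg ee xs k" using C[of k] YY_lower[of gg ee xs k] Kc_def by linarith
  have E: "EE (SS gg ee k) (QQ gg ee k) (TT gg ee k) \<le> exp ((real k)\<^sup>2 + real k)"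
    by (rule EE_bound) (use SS_ge4[of gg ee k] QQ_nonneg[of gg ee k] T[of k] in auto)
  show "YY gg ee xs k \<le> exp ((real k)\<^sup>2 + real k) + real k * norm xs"
  proof -
    have "- (TT gg ee k \<bullet> xs) \<le> norm (TT gg ee k) * norm xs"
      using norm_cauchy_schwarz[of "- TT gg ee k" xs] by simp
    also have "\<dots> \<le> real k * norm xs" using T[of k] by (intro mult_right_mono) auto
    finally show ?thesis using E by (simp add: YY_def)
  qed
  show "norm (alg_x gg ee (Suc k)) \<le> exp ((real k)\<^sup>2 + real k)"
    using gradE_bound[OF SS_pos, of gg ee k "QQ gg ee k" "TT gg ee k"] E by (simp add: alg_x_eq)
  show "CC gg ee xs k \<le> ((norm xs)\<^sup>2 * 2 * exp ((4 + \<gamma>)/4 + \<gamma>/4))" using C[of k] Kc_def by simp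
  show "convergent (CC gg ee xs)"
  proof (rule Bseq_monoseq_convergent)
    show "Bseq (CC gg ee xs)"
    proof (rule BseqI'[of _ "max Kc (\<bar>CC gg ee xs 0\<bar>)"])
      fix n
      have inc: "incseq (CC gg ee xs)" by (rule incseq_SucI) (rule CC_mono)
      have "CC gg ee xs 0 \<le> CC gg ee xs n" by (rule incseqD[OF inc]) simp
      thus "norm (CC gg ee xs n) \<le> max Kc \<bar>CC gg ee xs 0\<bar>" using C[of n] by auto
    qed
    show "monoseq (CC gg ee xs)" by (rule mono_SucI1) (simp add: CC_mono)
  qed
qed


fun upc :: "(nat \<Rightarrow> real) \<Rightarrow> real \<Rightarrow> real \<Rightarrow> nat \<Rightarrow> bool" where
  "upc X a b 0 = (X 0 \<le> a)"
| "upc X a b (Suc n) = ((upc X a b n \<and> X (Suc n) < b) \<or> (\<not> upc X a b n \<and> X (Suc n) \<le> a))"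

fun cnt :: "(nat \<Rightarrow> real) \<Rightarrow> real \<Rightarrow> real \<Rightarrow> nat \<Rightarrow> nat" where
  "cnt X a b 0 = 0"
| "cnt X a b (Suc n) = cnt X a b n + (if upc X a b n \<and> \<not> upc X a b (Suc n) then 1 else 0)"

definition WW :: "(nat \<Rightarrow> real) \<Rightarrow> real \<Rightarrow> nat \<Rightarrow> real" where
  "WW X a n = max (X n - a) 0"

lemma upc_ineq:
  assumes ab: "a < b"
  shows "(b - a) * real (cnt X a b n) + (if upc X a b n then WW X a n else 0)
         \<le> (\<Sum>k<n. if upc X a b k then WW X a (Suc k) - WW X a k else 0)"
proof (induction n)
  case 0 show ?case by (simp add: WW_def)
next
  case (Suc n)
  let ?S = "\<Sum>k<n. if upc X a b k then WW X a (Suc k) - WW X a k else 0"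
  have W0: "0 \<le> WW X a m" for m by (simp add: WW_def)
  show ?case
  proof (cases "upc X a b n")
    case U: True
    show ?thesis
    proof (cases "upc X a b (Suc n)")
      case True
      thus ?thesis using Suc.IH U by simp
    next
      case False
      hence "X (Suc n) \<ge> b" using U by auto
      hence "WW X a (Suc n) \<ge> b - a" by (simp add: WW_def)
      thus ?thesis using Suc.IH U False by (simp add: algebra_simps)
    qed
  next
    case U: False
    show ?thesis
    proof (cases "upc X a b (Suc n)")
      case True
      hence "X (Suc n) \<le> a" using U by auto
      hence "WW X a (Suc n) = 0" by (simp add: WW_def)
      thus ?thesis using Suc.IH U True by simp
    next
      case False
      thus ?thesis using Suc.IH U by simp
    qed
  qed
qed

lemma WW_step: "(if a < X k then X (Suc k) - X k else 0) \<le> WW X a (Suc k) - WW X a k"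
  by (auto simp: WW_def max_def)

lemma upc_le: "X k \<le> a \<Longrightarrow> a < b \<Longrightarrow> upc X a b k"
  by (cases k) auto

lemma upc_ge: "X k \<ge> b \<Longrightarrow> a < b \<Longrightarrow> \<not> upc X a b k"
  by (cases k) auto

lemma cnt_mono: "k \<le> j \<Longrightarrow> cnt X a b k \<le> cnt X a b j"
proof (induction j)
  case 0 thus ?case by simp
next
  case (Suc j) thus ?case by (cases "k = Suc j") auto
qed

lemma cnt_strict: "upc X a b k \<Longrightarrow> \<not> upc X a b j \<Longrightarrow> k \<le> j \<Longrightarrow> cnt X a b k < cnt X a b j"
proof (induction j)
  case 0 thus ?case by simp
next
  case (Suc j)
  show ?case
  proof (cases "k = Suc j")
    case True thus ?thesis using Suc by simp
  next
    case False
    hence kj: "k \<le> j" using Suc by simp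
    show ?thesis
    proof (cases "upc X a b j")
      case True
      hence "cnt X a b (Suc j) = cnt X a b j + 1" using Suc by simp
      thus ?thesis using cnt_mono[OF kj, of X a b] by simp
    next
      case False
      thus ?thesis using Suc kj cnt_mono[of j "Suc j" X a b] by simp
    qed
  qed
qed

lemma cnt_unbounded:
  assumes ab: "a < b" and fa: "\<forall>N. \<exists>n\<ge>N. X n \<le> a" and fb: "\<forall>N. \<exists>n\<ge>N. X n \<ge> b"
  shows "\<exists>j. cnt X a b j \<ge> C"
proof (induction C)
  case 0 show ?case by simp
next
  case (Suc C)
  then obtain j where j: "cnt X a b j \<ge> C" by blast
  obtain k where k: "k \<ge> j" "X k \<le> a" using fa by blast
  obtain j' where j': "j' \<ge> Suc k" "X j' \<ge> b" using fb by blast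
  have "cnt X a b k < cnt X a b j'"
    by (rule cnt_strict) (use k j' ab upc_le upc_ge in auto)
  moreover have "cnt X a b j \<le> cnt X a b k" using cnt_mono k by blast
  ultimately show ?case using j by (intro exI[of _ j']) simp
qed

lemma conv_crit:
  fixes Y :: "nat \<Rightarrow> real"
  assumes lb: "\<And>n. - K \<le> Y n"
    and fbd: "\<forall>N. \<exists>n\<ge>N. Y n \<le> B"
    and osc: "\<And>a b. a \<in> \<rat> \<Longrightarrow> b \<in> \<rat> \<Longrightarrow> a < b \<Longrightarrow>
                \<not> ((\<forall>N. \<exists>n\<ge>N. Y n \<le> a) \<and> (\<forall>N. \<exists>n\<ge>N. Y n \<ge> b))"
  shows "convergent Y"
proof -
  define l where "l = liminf (\<lambda>n. ereal (Y n))"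
  define u where "u = limsup (\<lambda>n. ereal (Y n))"
  have lu: "l \<le> u" by (simp add: l_def u_def Liminf_le_Limsup)
  have l_lb: "ereal (- K) \<le> l"
    unfolding l_def le_Liminf_iff
  proof (intro allI impI)
    fix y assume "y < ereal (- K)"
    thus "eventually (\<lambda>n. y < ereal (Y n)) sequentially"
      using lb by (intro always_eventually) (auto intro: less_le_trans)
  qed
  have l_ub: "l \<le> ereal B"
  proof (rule ccontr)
    assume "\<not> l \<le> ereal B"
    hence "ereal B < l" by simp
    hence "eventually (\<lambda>n. ereal B < ereal (Y n)) sequentially"
    proof -
      have "l \<le> liminf (\<lambda>n. ereal (Y n))" by (simp add: l_def)
      hence "\<forall>y<l. eventually (\<lambda>n. y < ereal (Y n)) sequentially" by (simp add: le_Liminf_iff)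
      thus ?thesis using \<open>ereal B < l\<close> by auto
    qed
    then obtain N where "\<forall>n\<ge>N. B < Y n" by (auto simp: eventually_sequentially)
    moreover obtain n where "n \<ge> N" "Y n \<le> B" using fbd by blast
    ultimately show False by force
  qed
  obtain L where L: "l = ereal L" using l_lb l_ub by (cases l) auto
  have "u \<le> l"
  proof (rule ccontr)
    assume "\<not> u \<le> l"
    hence lu': "ereal L < u" using L by simp
    obtain c where c: "ereal L < ereal c" "ereal c < u"
      using lu' by (metis ereal_dense2)
    obtain a where a: "a \<in> \<rat>" "L < a" "a < c" using c Rats_dense_in_real[of L c] by auto
    obtain b where b: "b \<in> \<rat>" "a < b" "b < c" using a Rats_dense_in_real[of a c] by auto
    have fa: "\<forall>N. \<exists>n\<ge>N. Y n \<le> a"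
    proof (rule ccontr)
      assume "\<not> (\<forall>N. \<exists>n\<ge>N. Y n \<le> a)"
      then obtain N where N: "\<forall>n\<ge>N. a < Y n" by (meson not_le)
      have "ereal a \<le> l"
        unfolding l_def le_Liminf_iff
      proof (intro allI impI)
        fix y assume y: "y < ereal a"
        show "eventually (\<lambda>n. y < ereal (Y n)) sequentially"
          unfolding eventually_sequentially
        proof (intro exI[of _ N] allI impI)
          fix n assume "n \<ge> N"
          hence "ereal a < ereal (Y n)" using N by simp
          thus "y < ereal (Y n)" using y by (rule less_trans[rotated])
        qed
      qed
      thus False using L a by simp
    qed
    have fb: "\<forall>N. \<exists>n\<ge>N. Y n \<ge> b"
    proof (rule ccontr)
      assume "\<not> (\<forall>N. \<exists>n\<ge>N. Y n \<ge> b)"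
      then obtain N where N: "\<forall>n\<ge>N. Y n < b" by (meson not_le)
      have "u \<le> ereal b"
        unfolding u_def Limsup_le_iff
      proof (intro allI impI)
        fix y assume y: "ereal b < y"
        show "eventually (\<lambda>n. ereal (Y n) < y) sequentially"
          unfolding eventually_sequentially
        proof (intro exI[of _ N] allI impI)
          fix n assume "n \<ge> N"
          hence "ereal (Y n) < ereal b" using N by simp
          thus "ereal (Y n) < y" using y by (rule less_trans)
        qed
      qed
      moreover have "ereal b < ereal c" using b by simp
      ultimately have "u < ereal c" by (rule le_less_trans)
      thus False using c(2) by simp
    qed
    show False using osc[OF a(1) b(1) b(2)] fa fb by blast
  qed
  hence "limsup Y \<le> L" "L \<le> liminf Y" using lu L by (simp_all add: u_def l_def)
  hence "Y \<longlonglongrightarrow> L" by (rule limsup_le_liminf_real)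
  thus ?thesis by (auto simp: convergent_def)
qed


lemma (in prob_space) upcross_AE:
  fixes X :: "nat \<Rightarrow> 'a \<Rightarrow> real" and F :: "nat \<Rightarrow> 'a measure" and K a b :: real
  assumes sub: "\<And>n. subalgebra M (F n)"
    and mono: "\<And>n. subalgebra (F (Suc n)) (F n)"
    and meas: "\<And>n. X n \<in> borel_measurable (F n)"
    and int: "\<And>n. integrable M (X n)"
    and ub: "AE \<omega> in M. \<forall>n. X n \<omega> \<le> K"
    and sub_mart: "\<And>n A. A \<in> sets (F n) \<Longrightarrow>
       (\<integral>\<omega>. indicator A \<omega> * X n \<omega> \<partial>M) \<le> (\<integral>\<omega>. indicator A \<omega> * X (Suc n) \<omega> \<partial>M)"
    and ab: "a < b"
  shows "AE \<omega> in M. \<not> ((\<forall>N. \<exists>n\<ge>N. X n \<omega> \<le> a) \<and> (\<forall>N. \<exists>n\<ge>N. X n \<omega> \<ge> b))"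
proof -
  have measM[measurable]: "\<And>n. X n \<in> borel_measurable M" using measurable_from_subalg[OF sub meas] .
  define Xf where "Xf \<omega> = (\<lambda>n. X n \<omega>)" for \<omega>
  have predF: "Measurable.pred (F k) (\<lambda>\<omega>. upc (Xf \<omega>) a b k)" for k
  proof (induction k)
    case 0
    have [measurable]: "X 0 \<in> borel_measurable (F 0)" by (rule meas)
    show ?case by (simp add: Xf_def) measurable
  next
    case (Suc k)
    have [measurable]: "Measurable.pred (F (Suc k)) (\<lambda>\<omega>. upc (Xf \<omega>) a b k)"
      by (rule measurable_from_subalg[OF mono Suc.IH])
    have [measurable]: "X (Suc k) \<in> borel_measurable (F (Suc k))" by (rule meas)
    have e: "(\<lambda>\<omega>. upc (Xf \<omega>) a b (Suc k)) =
      (\<lambda>\<omega>. (upc (Xf \<omega>) a b k \<and> X (Suc k) \<omega> < b) \<or> (\<not> upc (Xf \<omega>) a b k \<and> X (Suc k) \<omega> \<le> a))"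
      by (simp add: Xf_def)
    show ?case unfolding e by measurable
  qed
  have predM[measurable]: "Measurable.pred M (\<lambda>\<omega>. upc (Xf \<omega>) a b k)" for k
    by (rule measurable_from_subalg[OF sub predF])
  have cntM[measurable]: "(\<lambda>\<omega>. real (cnt (Xf \<omega>) a b n)) \<in> borel_measurable M" for n
  proof (induction n)
    case 0 show ?case by simp
  next
    case (Suc n)
    have [measurable]: "(\<lambda>\<omega>. real (cnt (Xf \<omega>) a b n)) \<in> borel_measurable M" by (rule Suc.IH)
    have e: "(\<lambda>\<omega>. real (cnt (Xf \<omega>) a b (Suc n))) = (\<lambda>\<omega>. real (cnt (Xf \<omega>) a b n) +
       (if upc (Xf \<omega>) a b n \<and> \<not> upc (Xf \<omega>) a b (Suc n) then 1 else 0))"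
      by (auto simp del: upc.simps)
    show ?case unfolding e by measurable
  qed
  have cnt_le: "cnt Y' a b n \<le> n" for Y' n by (induction n) auto
  have cnt_int: "integrable M (\<lambda>\<omega>. real (cnt (Xf \<omega>) a b n))" for n
    by (rule integrable_const_bound[where B="real n"]) (use cnt_le in auto)
  define W where "W n \<omega> = WW (Xf \<omega>) a n" for n \<omega>
  have W_eq: "W n \<omega> = max (X n \<omega> - a) 0" for n \<omega> by (simp add: W_def WW_def Xf_def)
  have W_int: "integrable M (W n)" for n
    unfolding W_eq[abs_def] using int by (intro integrable_max) auto
  have W_nn: "0 \<le> W n \<omega>" for n \<omega> by (simp add: W_eq)
  define U where "U k = {\<omega> \<in> space M. upc (Xf \<omega>) a b k}" for k
  have U_sets: "U k \<in> sets M" for k unfolding U_def by measurable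
  define G where "G k \<omega> = W (Suc k) \<omega> - W k \<omega>" for k \<omega>
  have G_int: "integrable M (G k)" for k unfolding G_def[abs_def] using W_int by auto
  have IG_int: "integrable M (\<lambda>\<omega>. indicator A \<omega> * G k \<omega>)" if "A \<in> sets M" for A k
    using integrable_mult_indicator[OF that G_int[of k]] by simp
  have step: "(\<integral>\<omega>. indicator (U k) \<omega> * G k \<omega> \<partial>M) \<le> (\<integral>\<omega>. G k \<omega> \<partial>M)" for k
  proof -
    define A where "A = {\<omega> \<in> space M. \<not> upc (Xf \<omega>) a b k \<and> a < X k \<omega>}"
    have AF: "A \<in> sets (F k)"
    proof -
      have [measurable]: "Measurable.pred (F k) (\<lambda>\<omega>. upc (Xf \<omega>) a b k)" by (rule predF)
      have [measurable]: "X k \<in> borel_measurable (F k)" by (rule meas)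
      have "{\<omega> \<in> space (F k). \<not> upc (Xf \<omega>) a b k \<and> a < X k \<omega>} \<in> sets (F k)" by measurable
      moreover have "space (F k) = space M" using sub[of k] by (simp add: subalgebra_def)
      ultimately show ?thesis by (simp add: A_def)
    qed
    have AM: "A \<in> sets M" using AF sub[of k] by (auto simp: subalgebra_def)
    have s: "(\<integral>\<omega>. indicator A \<omega> * X k \<omega> \<partial>M) \<le> (\<integral>\<omega>. indicator A \<omega> * X (Suc k) \<omega> \<partial>M)"
      by (rule sub_mart[OF AF])
    have iA: "integrable M (\<lambda>\<omega>. indicator A \<omega> * X j \<omega>)" for j
      using integrable_mult_indicator[OF AM int[of j]] by simp
    have "0 \<le> (\<integral>\<omega>. indicator A \<omega> * (X (Suc k) \<omega> - X k \<omega>) \<partial>M)"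
      using s iA by (simp add: right_diff_distrib)
    also have "\<dots> \<le> (\<integral>\<omega>. indicator (space M - U k) \<omega> * G k \<omega> \<partial>M)"
    proof (rule integral_mono)
      show "integrable M (\<lambda>\<omega>. indicator A \<omega> * (X (Suc k) \<omega> - X k \<omega>))"
        using iA by (simp add: right_diff_distrib)
      show "integrable M (\<lambda>\<omega>. indicator (space M - U k) \<omega> * G k \<omega>)" using U_sets by (intro IG_int) auto
      fix \<omega> assume \<omega>: "\<omega> \<in> space M"
      have ws: "(if a < Xf \<omega> k then Xf \<omega> (Suc k) - Xf \<omega> k else 0) \<le> WW (Xf \<omega>) a (Suc k) - WW (Xf \<omega>) a k"
        by (rule WW_step)
      show "indicator A \<omega> * (X (Suc k) \<omega> - X k \<omega>) \<le> indicator (space M - U k) \<omega> * G k \<omega>"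
        using ws \<omega> W_nn[of "Suc k" \<omega>] W_nn[of k \<omega>]
        by (auto simp: A_def U_def G_def W_def Xf_def indicator_def WW_def max_def)
    qed
    finally have c: "0 \<le> (\<integral>\<omega>. indicator (space M - U k) \<omega> * G k \<omega> \<partial>M)" .
    have "(\<integral>\<omega>. G k \<omega> \<partial>M) = (\<integral>\<omega>. indicator (U k) \<omega> * G k \<omega> + indicator (space M - U k) \<omega> * G k \<omega> \<partial>M)"
      by (rule Bochner_Integration.integral_cong[OF refl]) (auto simp: indicator_def U_def)
    also have "\<dots> = (\<integral>\<omega>. indicator (U k) \<omega> * G k \<omega> \<partial>M) + (\<integral>\<omega>. indicator (space M - U k) \<omega> * G k \<omega> \<partial>M)"
      using U_sets by (intro Bochner_Integration.integral_add IG_int) auto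
    finally show ?thesis using c by linarith
  qed
  define Bd where "Bd = max (K - a) 0"
  have Wn_le: "(\<integral>\<omega>. W n \<omega> \<partial>M) \<le> Bd" for n
  proof -
    have "(\<integral>\<omega>. W n \<omega> \<partial>M) \<le> (\<integral>\<omega>. Bd \<partial>M)"
    proof (rule integral_mono_AE[OF W_int])
      show "integrable M (\<lambda>\<omega>. Bd)" by simp
      show "AE \<omega> in M. W n \<omega> \<le> Bd" using ub
      proof eventually_elim
        fix \<omega> assume "\<forall>n. X n \<omega> \<le> K"
        hence "X n \<omega> \<le> K" by blast
        thus "W n \<omega> \<le> Bd" by (simp add: W_eq Bd_def)
      qed
    qed
    thus ?thesis by (simp add: prob_space)
  qed
  have cnt_bound: "(b - a) * (\<integral>\<omega>. real (cnt (Xf \<omega>) a b n) \<partial>M) \<le> Bd" for n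
  proof -
    have "(b - a) * (\<integral>\<omega>. real (cnt (Xf \<omega>) a b n) \<partial>M) = (\<integral>\<omega>. (b - a) * real (cnt (Xf \<omega>) a b n) \<partial>M)"
      by simp
    also have "\<dots> \<le> (\<integral>\<omega>. (\<Sum>k<n. indicator (U k) \<omega> * G k \<omega>) \<partial>M)"
    proof (rule integral_mono)
      show "integrable M (\<lambda>\<omega>. (b - a) * real (cnt (Xf \<omega>) a b n))" using cnt_int by simp
      show "integrable M (\<lambda>\<omega>. \<Sum>k<n. indicator (U k) \<omega> * G k \<omega>)"
        using U_sets by (intro Bochner_Integration.integrable_sum IG_int) auto
      fix \<omega> assume \<omega>: "\<omega> \<in> space M"
      have "(b - a) * real (cnt (Xf \<omega>) a b n) + (if upc (Xf \<omega>) a b n then WW (Xf \<omega>) a n else 0)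
         \<le> (\<Sum>k<n. if upc (Xf \<omega>) a b k then WW (Xf \<omega>) a (Suc k) - WW (Xf \<omega>) a k else 0)"
        by (rule upc_ineq[OF ab])
      moreover have "0 \<le> (if upc (Xf \<omega>) a b n then WW (Xf \<omega>) a n else 0)" by (simp add: WW_def)
      moreover have "(\<Sum>k<n. if upc (Xf \<omega>) a b k then WW (Xf \<omega>) a (Suc k) - WW (Xf \<omega>) a k else 0)
          = (\<Sum>k<n. indicator (U k) \<omega> * G k \<omega>)"
        using \<omega> by (intro sum.cong) (auto simp: U_def G_def W_def indicator_def)
      ultimately show "(b - a) * real (cnt (Xf \<omega>) a b n) \<le> (\<Sum>k<n. indicator (U k) \<omega> * G k \<omega>)"
        by linarith
    qed
    also have "\<dots> = (\<Sum>k<n. (\<integral>\<omega>. indicator (U k) \<omega> * G k \<omega> \<partial>M))"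
      using U_sets by (intro Bochner_Integration.integral_sum IG_int) auto
    also have "\<dots> \<le> (\<Sum>k<n. (\<integral>\<omega>. G k \<omega> \<partial>M))" by (intro sum_mono step)
    also have "\<dots> = (\<Sum>k<n. (\<integral>\<omega>. W (Suc k) \<omega> \<partial>M) - (\<integral>\<omega>. W k \<omega> \<partial>M))"
      unfolding G_def using W_int by (intro sum.cong refl Bochner_Integration.integral_diff) auto
    also have "\<dots> = (\<integral>\<omega>. W n \<omega> \<partial>M) - (\<integral>\<omega>. W 0 \<omega> \<partial>M)"
      by (rule sum_lessThan_telescope)
    also have "\<dots> \<le> Bd"
    proof -
      have "0 \<le> (\<integral>\<omega>. W 0 \<omega> \<partial>M)" by (rule Bochner_Integration.integral_nonneg) (simp add: W_nn)
      thus ?thesis using Wn_le[of n] by linarith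
    qed
    finally show ?thesis .
  qed
  define f where "f n \<omega> = ennreal (real (cnt (Xf \<omega>) a b n))" for n \<omega>
  have fM[measurable]: "f n \<in> borel_measurable M" for n unfolding f_def by measurable
  have f_inc: "incseq f"
    unfolding incseq_def le_fun_def f_def by (auto intro!: ennreal_leI cnt_mono)
  have "(\<integral>\<^sup>+ \<omega>. (SUP n. f n \<omega>) \<partial>M) = (SUP n. integral\<^sup>N M (f n))"
    by (rule nn_integral_monotone_convergence_SUP[OF f_inc fM])
  also have "\<dots> \<le> ennreal (Bd / (b - a))"
  proof (rule SUP_least)
    fix n
    have "integral\<^sup>N M (f n) = ennreal (\<integral>\<omega>. real (cnt (Xf \<omega>) a b n) \<partial>M)"
      unfolding f_def by (rule nn_integral_eq_integral[OF cnt_int]) simp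
    also have "\<dots> \<le> ennreal (Bd / (b - a))"
      using cnt_bound[of n] ab by (intro ennreal_leI) (simp add: field_simps)
    finally show "integral\<^sup>N M (f n) \<le> ennreal (Bd / (b - a))" .
  qed
  finally have "(\<integral>\<^sup>+ \<omega>. (SUP n. f n \<omega>) \<partial>M) \<noteq> \<infinity>" by (auto simp: top_unique)
  hence fin: "AE \<omega> in M. (SUP n. f n \<omega>) \<noteq> \<infinity>"
    by (intro nn_integral_noteq_infinite) measurable
  show ?thesis using fin
  proof eventually_elim
    fix \<omega> assume S: "(SUP n. f n \<omega>) \<noteq> \<infinity>"
    show "\<not> ((\<forall>N. \<exists>n\<ge>N. X n \<omega> \<le> a) \<and> (\<forall>N. \<exists>n\<ge>N. X n \<omega> \<ge> b))"
    proof
      assume osc: "(\<forall>N. \<exists>n\<ge>N. X n \<omega> \<le> a) \<and> (\<forall>N. \<exists>n\<ge>N. X n \<omega> \<ge> b)"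
      obtain s where s: "(SUP n. f n \<omega>) = ennreal s" "0 \<le> s" using S by (cases "(SUP n. f n \<omega>)") auto
      obtain j where j: "cnt (Xf \<omega>) a b j \<ge> nat \<lceil>s\<rceil> + 1"
      proof -
        have "\<exists>j. cnt (Xf \<omega>) a b j \<ge> nat \<lceil>s\<rceil> + 1"
          by (rule cnt_unbounded[OF ab]) (use osc in \<open>auto simp: Xf_def\<close>)
        thus ?thesis using that by blast
      qed
      have "f j \<omega> \<le> ennreal s" using s(1) by (metis SUP_upper UNIV_I)
      hence "real (cnt (Xf \<omega>) a b j) \<le> s" using s(2) by (simp add: f_def ennreal_le_iff)
      moreover have "real (cnt (Xf \<omega>) a b j) \<ge> real (nat \<lceil>s\<rceil> + 1)" using j by linarith
      moreover have "real (nat \<lceil>s\<rceil>) \<ge> s" by linarith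
      ultimately show False by simp
    qed
  qed
qed


lemma (in prob_space) supermart_conv:
  fixes Y :: "nat \<Rightarrow> 'a \<Rightarrow> real" and F :: "nat \<Rightarrow> 'a measure" and K :: real
  assumes sub: "\<And>n. subalgebra M (F n)"
    and mono: "\<And>n. subalgebra (F (Suc n)) (F n)"
    and meas: "\<And>n. Y n \<in> borel_measurable (F n)"
    and int: "\<And>n. integrable M (Y n)"
    and lb: "AE \<omega> in M. \<forall>n. - K \<le> Y n \<omega>"
    and sup: "\<And>n A. A \<in> sets (F n) \<Longrightarrow>
       (\<integral>\<omega>. indicator A \<omega> * Y (Suc n) \<omega> \<partial>M) \<le> (\<integral>\<omega>. indicator A \<omega> * Y n \<omega> \<partial>M)"
  shows "AE \<omega> in M. convergent (\<lambda>n. Y n \<omega>)"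
proof -
  have measM[measurable]: "\<And>n. Y n \<in> borel_measurable M" using measurable_from_subalg[OF sub meas] .
  have osc: "AE \<omega> in M. \<not> ((\<forall>N. \<exists>n\<ge>N. Y n \<omega> \<le> a) \<and> (\<forall>N. \<exists>n\<ge>N. Y n \<omega> \<ge> b))"
    if ab: "a < b" for a b
  proof -
    have "AE \<omega> in M. \<not> ((\<forall>N. \<exists>n\<ge>N. (\<lambda>n \<omega>. - Y n \<omega>) n \<omega> \<le> - b) \<and>
                          (\<forall>N. \<exists>n\<ge>N. (\<lambda>n \<omega>. - Y n \<omega>) n \<omega> \<ge> - a))"
    proof (rule upcross_AE[where F=F and X="\<lambda>n \<omega>. - Y n \<omega>" and K=K and a="-b" and b="-a"])
      show "subalgebra M (F n)" for n by (rule sub)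
      show "subalgebra (F (Suc n)) (F n)" for n by (rule mono)
      show "(\<lambda>\<omega>. - Y n \<omega>) \<in> borel_measurable (F n)" for n using meas[of n] by measurable
      show "integrable M (\<lambda>\<omega>. - Y n \<omega>)" for n using int[of n] by simp
      show "AE \<omega> in M. \<forall>n. - Y n \<omega> \<le> K" using lb by eventually_elim (metis minus_le_iff)
      show "(\<integral>\<omega>. indicator A \<omega> * - Y n \<omega> \<partial>M) \<le> (\<integral>\<omega>. indicator A \<omega> * - Y (Suc n) \<omega> \<partial>M)"
        if "A \<in> sets (F n)" for n A using sup[OF that] by simp
      show "- b < - a" using ab by simp
    qed
    thus ?thesis by eventually_elim auto
  qed
  have oscQ: "AE \<omega> in M. \<forall>p\<in>\<rat> \<times> \<rat>. fst p < snd p \<longrightarrow>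
      \<not> ((\<forall>N. \<exists>n\<ge>N. Y n \<omega> \<le> fst p) \<and> (\<forall>N. \<exists>n\<ge>N. Y n \<omega> \<ge> snd p))"
  proof (rule AE_ball_countable')
    fix p :: "real \<times> real" assume "p \<in> \<rat> \<times> \<rat>"
    show "AE \<omega> in M. fst p < snd p \<longrightarrow>
      \<not> ((\<forall>N. \<exists>n\<ge>N. Y n \<omega> \<le> fst p) \<and> (\<forall>N. \<exists>n\<ge>N. Y n \<omega> \<ge> snd p))"
    proof (cases "fst p < snd p")
      case True
      show ?thesis using osc[OF True] by eventually_elim simp
    qed simp
  next
    show "countable (\<rat> \<times> \<rat>)" by (intro countable_SIGMA countable_rat)
  qed
  have int_dec: "(\<integral>\<omega>. Y n \<omega> \<partial>M) \<le> (\<integral>\<omega>. Y 0 \<omega> \<partial>M)" for n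
  proof (induction n)
    case 0 show ?case by simp
  next
    case (Suc n)
    have sp: "space M \<in> sets (F n)" using sub[of n] by (metis sets.top subalgebra_def)
    have e: "(\<integral>\<omega>. indicator (space M) \<omega> * Y j \<omega> \<partial>M) = (\<integral>\<omega>. Y j \<omega> \<partial>M)" for j
      by (rule Bochner_Integration.integral_cong[OF refl]) simp
    show ?case using sup[OF sp] Suc.IH by (simp add: e)
  qed
  define Z where "Z n \<omega> = ennreal (Y n \<omega> + K)" for n \<omega>
  have ZM[measurable]: "Z n \<in> borel_measurable M" for n unfolding Z_def by measurable
  have "(\<integral>\<^sup>+ \<omega>. liminf (\<lambda>n. Z n \<omega>) \<partial>M) \<le> liminf (\<lambda>n. integral\<^sup>N M (Z n))"
    by (rule nn_integral_liminf) simp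
  also have "\<dots> \<le> ennreal ((\<integral>\<omega>. Y 0 \<omega> \<partial>M) + K)"
  proof (rule Liminf_le)
    show "sequentially \<noteq> bot" by simp
    show "\<forall>\<^sub>F n in sequentially. integral\<^sup>N M (Z n) \<le> ennreal ((\<integral>\<omega>. Y 0 \<omega> \<partial>M) + K)"
    proof (rule always_eventually, rule allI)
      fix n
      have "integral\<^sup>N M (Z n) = ennreal (\<integral>\<omega>. Y n \<omega> + K \<partial>M)"
        unfolding Z_def
      proof (rule nn_integral_eq_integral)
        show "integrable M (\<lambda>\<omega>. Y n \<omega> + K)" using int[of n] by simp
        show "AE \<omega> in M. 0 \<le> Y n \<omega> + K" using lb
        proof eventually_elim
          fix \<omega> assume "\<forall>n. - K \<le> Y n \<omega>"
          hence "- K \<le> Y n \<omega>" by blast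
          thus "0 \<le> Y n \<omega> + K" by simp
        qed
      qed
      also have "\<dots> = ennreal ((\<integral>\<omega>. Y n \<omega> \<partial>M) + K)"
        using int[of n] by (simp add: prob_space)
      also have "\<dots> \<le> ennreal ((\<integral>\<omega>. Y 0 \<omega> \<partial>M) + K)"
        using int_dec[of n] by (intro ennreal_leI) simp
      finally show "integral\<^sup>N M (Z n) \<le> ennreal ((\<integral>\<omega>. Y 0 \<omega> \<partial>M) + K)" .
    qed
  qed
  finally have "(\<integral>\<^sup>+ \<omega>. liminf (\<lambda>n. Z n \<omega>) \<partial>M) \<noteq> \<infinity>" by (auto simp: top_unique)
  hence finZ: "AE \<omega> in M. liminf (\<lambda>n. Z n \<omega>) \<noteq> \<infinity>"
    by (intro nn_integral_noteq_infinite) measurable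
  show ?thesis using lb oscQ finZ
  proof eventually_elim
    fix \<omega>
    assume lbw: "\<forall>n. - K \<le> Y n \<omega>"
      and oscw: "\<forall>p\<in>\<rat> \<times> \<rat>. fst p < snd p \<longrightarrow>
          \<not> ((\<forall>N. \<exists>n\<ge>N. Y n \<omega> \<le> fst p) \<and> (\<forall>N. \<exists>n\<ge>N. Y n \<omega> \<ge> snd p))"
      and fw: "liminf (\<lambda>n. Z n \<omega>) \<noteq> \<infinity>"
    obtain l where l: "liminf (\<lambda>n. Z n \<omega>) = ennreal l" "0 \<le> l" using fw by (cases "liminf (\<lambda>n. Z n \<omega>)") auto
    have fbd: "\<forall>N. \<exists>n\<ge>N. Y n \<omega> \<le> l + 1 - K"
    proof (rule ccontr)
      assume "\<not> (\<forall>N. \<exists>n\<ge>N. Y n \<omega> \<le> l + 1 - K)"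
      then obtain N where N: "\<forall>n\<ge>N. l + 1 - K < Y n \<omega>" by (meson not_le)
      have "ennreal (l + 1) \<le> liminf (\<lambda>n. Z n \<omega>)"
        unfolding le_Liminf_iff
      proof (intro allI impI)
        fix y assume y: "y < ennreal (l + 1)"
        show "\<forall>\<^sub>F n in sequentially. y < Z n \<omega>"
          unfolding eventually_sequentially
        proof (intro exI[of _ N] allI impI)
          fix n assume "n \<ge> N"
          hence "l + 1 \<le> Y n \<omega> + K" using N by force
          hence "ennreal (l + 1) \<le> Z n \<omega>" unfolding Z_def by (rule ennreal_leI)
          thus "y < Z n \<omega>" using y by (rule less_le_trans[rotated])
        qed
      qed
      thus False using l by (simp add: ennreal_le_iff)
    qed
    show "convergent (\<lambda>n. Y n \<omega>)"
    proof (rule conv_crit[OF _ fbd])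
      show "- K \<le> Y n \<omega>" for n using lbw by blast
      fix a b :: real assume "a \<in> \<rat>" "b \<in> \<rat>" "a < b"
      thus "\<not> ((\<forall>N. \<exists>n\<ge>N. Y n \<omega> \<le> a) \<and> (\<forall>N. \<exists>n\<ge>N. Y n \<omega> \<ge> b))"
        using oscw[rule_format, of "(a, b)"] by simp
    qed
  qed
qed


theorem lemma3:
  fixes M :: "'a measure"
    and F :: "'v::euclidean_space \<Rightarrow> real" and gradF :: "'v \<Rightarrow> 'v" and xstar :: 'v
    and g :: "nat \<Rightarrow> 'a \<Rightarrow> 'v" and eta :: "nat \<Rightarrow> 'a \<Rightarrow> real"
    and G \<gamma> :: real
  defines "x \<equiv> (\<lambda>t \<omega>. alg_x (\<lambda>s. g s \<omega>) (\<lambda>s. eta s \<omega>) t)"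
    and "\<phi> \<equiv> (\<lambda>t \<omega>. alg_phi (\<lambda>s. g s \<omega>) (\<lambda>s. eta s \<omega>) t)"
    and "Fs \<equiv> alg_filtration M (\<lambda>t \<omega>. alg_x (\<lambda>s. g s \<omega>) (\<lambda>s. eta s \<omega>) t) g"
  assumes "prob_space M"
    and "G > 0"
    and "variationally_coherent F gradF xstar"
    and "\<And>t. t \<ge> 1 \<Longrightarrow> g t \<in> borel_measurable M"
    and "\<And>t. t \<ge> 1 \<Longrightarrow> eta t \<in> borel_measurable (Fs t)"
    and "\<And>t \<omega>. t \<ge> 1 \<Longrightarrow> \<omega> \<in> space M \<Longrightarrow> eta t \<omega> \<ge> 0"
    and "\<And>t b. t \<ge> 1 \<Longrightarrow> b \<in> Basis \<Longrightarrow>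
           AE \<omega> in M. real_cond_exp M (Fs t) (\<lambda>\<omega>. g t \<omega> \<bullet> b) \<omega> = gradF (x t \<omega>) \<bullet> b"
    and "\<And>t. t \<ge> 1 \<Longrightarrow> AE \<omega> in M. norm (g t \<omega>) \<le> G"
    and "\<gamma> > 0"
    and "AE \<omega> in M. summable (\<lambda>t. (eta (Suc t) \<omega>)\<^sup>2 * (norm (g (Suc t) \<omega>))\<^sup>2) \<and>
                     (\<Sum>t. (eta (Suc t) \<omega>)\<^sup>2 * (norm (g (Suc t) \<omega>))\<^sup>2) < \<gamma> \<and>
                     filterlim (\<lambda>n. \<Sum>t\<in>{1..n}. eta t \<omega>) at_top sequentially \<and>
                     (\<forall>t\<ge>1. eta t \<omega> \<le> 1 / G)"
  shows "\<exists>Binf. Binf \<in> borel_measurable M \<and>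
           (AE \<omega> in M. (\<lambda>t. bregman (\<phi> t \<omega>) xstar (x t \<omega>)) \<longlonglongrightarrow> Binf \<omega>)"
proof -
  interpret P: prob_space M by (rule assms(4))
  have G0: "G > 0" by (rule assms(5))
  have coh: "variationally_coherent F gradF xstar" by (rule assms(6))
  have gM[measurable]: "\<And>t. t \<ge> 1 \<Longrightarrow> g t \<in> borel_measurable M" by (rule assms(7))
  have etaF: "\<And>t. t \<ge> 1 \<Longrightarrow> eta t \<in> borel_measurable (Fs t)" by (rule assms(8))
  have eta0: "\<And>t \<omega>. t \<ge> 1 \<Longrightarrow> \<omega> \<in> space M \<Longrightarrow> eta t \<omega> \<ge> 0" by (rule assms(9))
  have ce: "\<And>t b. t \<ge> 1 \<Longrightarrow> b \<in> Basis \<Longrightarrow>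
           AE \<omega> in M. real_cond_exp M (Fs t) (\<lambda>\<omega>. g t \<omega> \<bullet> b) \<omega> = gradF (x t \<omega>) \<bullet> b" by (rule assms(10))
  have gG: "\<And>t. t \<ge> 1 \<Longrightarrow> AE \<omega> in M. norm (g t \<omega>) \<le> G" by (rule assms(11))
  have big: "AE \<omega> in M. summable (\<lambda>t. (eta (Suc t) \<omega>)\<^sup>2 * (norm (g (Suc t) \<omega>))\<^sup>2) \<and>
                     (\<Sum>t. (eta (Suc t) \<omega>)\<^sup>2 * (norm (g (Suc t) \<omega>))\<^sup>2) < \<gamma> \<and>
                     filterlim (\<lambda>n. \<Sum>t\<in>{1..n}. eta t \<omega>) at_top sequentially \<and>
                     (\<forall>t\<ge>1. eta t \<omega> \<le> 1 / G)" by (rule assms(13))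
  have Fs_eq: "Fs = alg_filtration M x g" by (simp add: Fs_def x_def)
  have etaM: "eta t \<in> borel_measurable M" if "t \<ge> 1" for t
  proof -
    have "\<forall>i. 1 \<le> i \<and> i \<le> n \<longrightarrow> eta i \<in> borel_measurable M" for n
    proof (induction n)
      case 0 show ?case by simp
    next
      case (Suc n)
      have xM: "x i \<in> borel_measurable M" if i: "1 \<le> i" "i \<le> Suc n" for i
      proof -
        have st: "(\<lambda>\<omega>. SS (\<lambda>s. g s \<omega>) (\<lambda>s. eta s \<omega>) (i-1)) \<in> borel_measurable M \<and>
           (\<lambda>\<omega>. QQ (\<lambda>s. g s \<omega>) (\<lambda>s. eta s \<omega>) (i-1)) \<in> borel_measurable M \<and>
           (\<lambda>\<omega>. TT (\<lambda>s. g s \<omega>) (\<lambda>s. eta s \<omega>) (i-1)) \<in> borel_measurable M"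
          by (rule state_meas) (use Suc.IH gM i in auto)
        note [measurable] = st[THEN conjunct1] st[THEN conjunct2, THEN conjunct1] st[THEN conjunct2, THEN conjunct2]
        show ?thesis unfolding x_def alg_x_eq by measurable
      qed
      have sub: "subalgebra M (Fs (Suc n))" unfolding Fs_eq by (rule Fs_sub) (use xM gM in auto)
      have "eta (Suc n) \<in> borel_measurable M" using measurable_from_subalg[OF sub etaF[of "Suc n"]] by simp
      then show ?case using Suc.IH by (auto simp: le_Suc_eq)
    qed
    thus ?thesis using that by blast
  qed
  have stM: "(\<lambda>\<omega>. SS (\<lambda>s. g s \<omega>) (\<lambda>s. eta s \<omega>) k) \<in> borel_measurable M \<and>
           (\<lambda>\<omega>. QQ (\<lambda>s. g s \<omega>) (\<lambda>s. eta s \<omega>) k) \<in> borel_measurable M \<and>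
           (\<lambda>\<omega>. TT (\<lambda>s. g s \<omega>) (\<lambda>s. eta s \<omega>) k) \<in> borel_measurable M" for k
    by (rule state_meas) (use gM etaM in auto)
  note stM' [measurable] = stM[THEN conjunct1] stM[THEN conjunct2, THEN conjunct1] stM[THEN conjunct2, THEN conjunct2]
  have xM[measurable]: "x t \<in> borel_measurable M" for t unfolding x_def alg_x_eq by measurable
  have subF: "subalgebra M (Fs t)" for t unfolding Fs_eq by (rule Fs_sub) (use xM gM in auto)
  have monoF: "subalgebra (Fs t') (Fs t)" if "t \<le> t'" for t t' unfolding Fs_eq by (rule Fs_mono[OF that])
  have etaFt: "eta i \<in> borel_measurable (Fs t)" if "1 \<le> i" "i \<le> t" for i t
    using measurable_from_subalg[OF monoF[OF that(2)] etaF[OF that(1)]] .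
  have gFt: "g i \<in> borel_measurable (Fs t)" if "1 \<le> i" "i < t" for i t
    unfolding Fs_eq by (rule Fs_meas_g[OF that])
  have xFt: "x i \<in> borel_measurable (Fs t)" if "1 \<le> i" "i \<le> t" for i t
    unfolding Fs_eq by (rule Fs_meas_x[OF that])
  have stF: "(\<lambda>\<omega>. SS (\<lambda>s. g s \<omega>) (\<lambda>s. eta s \<omega>) k) \<in> borel_measurable (Fs t) \<and>
           (\<lambda>\<omega>. QQ (\<lambda>s. g s \<omega>) (\<lambda>s. eta s \<omega>) k) \<in> borel_measurable (Fs t) \<and>
           (\<lambda>\<omega>. TT (\<lambda>s. g s \<omega>) (\<lambda>s. eta s \<omega>) k) \<in> borel_measurable (Fs t)" if "k < t" for k t
    by (rule state_meas) (use gFt etaFt that in auto)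
  define good where "good \<omega> \<longleftrightarrow> (\<forall>t\<ge>1. norm (g t \<omega>) \<le> G) \<and>
      summable (\<lambda>t. (eta (Suc t) \<omega>)\<^sup>2 * (norm (g (Suc t) \<omega>))\<^sup>2) \<and>
      (\<Sum>t. (eta (Suc t) \<omega>)\<^sup>2 * (norm (g (Suc t) \<omega>))\<^sup>2) < \<gamma> \<and> (\<forall>t\<ge>1. eta t \<omega> \<le> 1 / G)" for \<omega>
  have AEgood: "AE \<omega> in M. good \<omega>"
  proof -
    have "AE \<omega> in M. \<forall>t. t \<ge> 1 \<longrightarrow> norm (g t \<omega>) \<le> G"
      unfolding AE_all_countable
    proof (intro allI)
      fix t :: nat
      show "AE \<omega> in M. t \<ge> 1 \<longrightarrow> norm (g t \<omega>) \<le> G"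
      proof (cases "t \<ge> 1")
        case True show ?thesis using gG[OF True] by eventually_elim simp
      qed simp
    qed
    thus ?thesis using big by eventually_elim (auto simp: good_def)
  qed
  have l1: "norm (ll (\<lambda>s. g s \<omega>) (\<lambda>s. eta s \<omega>) t) \<le> 1" if "\<omega> \<in> space M" "good \<omega>" "t \<ge> 1" for \<omega> t
  proof -
    have e: "0 \<le> eta t \<omega>" "eta t \<omega> \<le> 1/G" "norm (g t \<omega>) \<le> G"
      using eta0[OF that(3,1)] that(2,3) by (auto simp: good_def)
    have "norm (ll (\<lambda>s. g s \<omega>) (\<lambda>s. eta s \<omega>) t) = eta t \<omega> * norm (g t \<omega>)"
      using e by (simp add: ll_def)
    also have "\<dots> \<le> (1/G) * G" using e G0 by (intro mult_mono) auto
    finally show ?thesis using G0 by simp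
  qed
  have ls: "(\<Sum>i<k. (norm (ll (\<lambda>s. g s \<omega>) (\<lambda>s. eta s \<omega>) (Suc i)))\<^sup>2) \<le> \<gamma>" if "good \<omega>" for \<omega> k
  proof -
    have "(\<Sum>i<k. (norm (ll (\<lambda>s. g s \<omega>) (\<lambda>s. eta s \<omega>) (Suc i)))\<^sup>2)
        = (\<Sum>i<k. (eta (Suc i) \<omega>)\<^sup>2 * (norm (g (Suc i) \<omega>))\<^sup>2)"
      by (simp add: ll_def power_mult_distrib)
    also have "\<dots> \<le> (\<Sum>t. (eta (Suc t) \<omega>)\<^sup>2 * (norm (g (Suc t) \<omega>))\<^sup>2)"
      by (rule sum_le_suminf) (use that in \<open>auto simp: good_def\<close>)
    finally show ?thesis using that by (simp add: good_def)
  qed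
  define Kc where "Kc = (norm xstar)\<^sup>2 * 2 * exp ((4 + \<gamma>)/4 + \<gamma>/4)"
  have gbs: "- Kc \<le> YY (\<lambda>s. g s \<omega>) (\<lambda>s. eta s \<omega>) xstar k"
      "YY (\<lambda>s. g s \<omega>) (\<lambda>s. eta s \<omega>) xstar k \<le> exp ((real k)\<^sup>2 + real k) + real k * norm xstar"
      "norm (alg_x (\<lambda>s. g s \<omega>) (\<lambda>s. eta s \<omega>) (Suc k)) \<le> exp ((real k)\<^sup>2 + real k)"
      "convergent (CC (\<lambda>s. g s \<omega>) (\<lambda>s. eta s \<omega>) xstar)"
    if "\<omega> \<in> space M" "good \<omega>" for \<omega> k
    using good_bounds(5)[where gg="\<lambda>s. g s \<omega>" and ee="\<lambda>s. eta s \<omega>" and xs=xstar and \<gamma>=\<gamma> and k=k,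
      OF l1[OF that] ls[OF that(2)]]
      good_bounds(6)[where gg="\<lambda>s. g s \<omega>" and ee="\<lambda>s. eta s \<omega>" and xs=xstar and \<gamma>=\<gamma> and k=k,
      OF l1[OF that] ls[OF that(2)]]
      good_bounds(7)[where gg="\<lambda>s. g s \<omega>" and ee="\<lambda>s. eta s \<omega>" and \<gamma>=\<gamma> and k=k,
      OF l1[OF that] ls[OF that(2)]]
      good_bounds(8)[where gg="\<lambda>s. g s \<omega>" and ee="\<lambda>s. eta s \<omega>" and xs=xstar and \<gamma>=\<gamma>,
      OF l1[OF that] ls[OF that(2)]]
    by (simp_all add: Kc_def)
  define Yp where "Yp k \<omega> = YY (\<lambda>s. g s \<omega>) (\<lambda>s. eta s \<omega>) xstar k" for k \<omega>
  have YpF: "Yp n \<in> borel_measurable (Fs (Suc n))" for n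
  proof -
    have st: "(\<lambda>\<omega>. SS (\<lambda>s. g s \<omega>) (\<lambda>s. eta s \<omega>) n) \<in> borel_measurable (Fs (Suc n)) \<and>
           (\<lambda>\<omega>. QQ (\<lambda>s. g s \<omega>) (\<lambda>s. eta s \<omega>) n) \<in> borel_measurable (Fs (Suc n)) \<and>
           (\<lambda>\<omega>. TT (\<lambda>s. g s \<omega>) (\<lambda>s. eta s \<omega>) n) \<in> borel_measurable (Fs (Suc n))" by (rule stF) simp
    note [measurable] = st[THEN conjunct1] st[THEN conjunct2, THEN conjunct1] st[THEN conjunct2, THEN conjunct2]
    show ?thesis unfolding Yp_def[abs_def] YY_def by measurable
  qed
  have YpM[measurable]: "Yp n \<in> borel_measurable M" for n unfolding Yp_def[abs_def] YY_def by measurable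
  have Yp_int: "integrable M (Yp n)" for n
  proof (rule P.integrable_const_bound[where B="exp ((real n)\<^sup>2 + real n) + real n * norm xstar + Kc"])
    show "AE \<omega> in M. norm (Yp n \<omega>) \<le> exp ((real n)\<^sup>2 + real n) + real n * norm xstar + Kc"
      using AEgood
      using AE_space
    proof eventually_elim
      case (elim \<omega>)
      have a: "- Kc \<le> Yp n \<omega>" "Yp n \<omega> \<le> exp ((real n)\<^sup>2 + real n) + real n * norm xstar"
        using gbs(1,2)[OF elim(2,1)] by (simp_all add: Yp_def)
      have k0: "0 \<le> Kc" by (simp add: Kc_def)
      have e0: "0 \<le> exp ((real n)\<^sup>2 + real n)" by simp
      have n0: "0 \<le> real n * norm xstar" by simp
      have "\<bar>Yp n \<omega>\<bar> \<le> exp ((real n)\<^sup>2 + real n) + real n * norm xstar + Kc"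
        using a k0 e0 n0 by linarith
      thus ?case by simp
    qed
  qed simp
  have Yp_lb: "AE \<omega> in M. \<forall>n. - Kc \<le> Yp n \<omega>"
    using AEgood AE_space by eventually_elim (auto simp: Yp_def intro: gbs)
  have sup: "(\<integral>\<omega>. indicator A \<omega> * Yp (Suc n) \<omega> \<partial>M) \<le> (\<integral>\<omega>. indicator A \<omega> * Yp n \<omega> \<partial>M)"
    if A: "A \<in> sets (Fs (Suc n))" for n A
  proof -
    define t where "t = Suc n"
    have t1: "t \<ge> 1" by (simp add: t_def)
    have AM: "A \<in> sets M" using A subF[of "Suc n"] by (auto simp: subalgebra_def)
    have AF: "A \<in> sets (Fs t)" using A by (simp add: t_def)
    have gcont: "continuous_on UNIV gradF" using coh by (simp add: variationally_coherent_def)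
    have gradFB[measurable]: "gradF \<in> borel_measurable borel" by (rule borel_measurable_continuous_onI[OF gcont])
    have etaFt'[measurable]: "eta t \<in> borel_measurable (Fs t)" by (rule etaFt) (use t1 in auto)
    have xFt'[measurable]: "x t \<in> borel_measurable (Fs t)" by (rule xFt) (use t1 in auto)
    have gtM[measurable]: "g t \<in> borel_measurable M" by (rule gM[OF t1])
    have etatM[measurable]: "eta t \<in> borel_measurable M" by (rule etaM[OF t1])
    define Kb where "Kb b \<omega> = indicator A \<omega> * (eta t \<omega> * ((x t \<omega> - xstar) \<bullet> b))" for b \<omega>
    have KbF[measurable]: "Kb b \<in> borel_measurable (Fs t)" for b
      unfolding Kb_def[abs_def] using AF by measurable
    have KbM[measurable]: "Kb b \<in> borel_measurable M" for b
      by (rule measurable_from_subalg[OF subF KbF])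
    define C where "C = (1/G) * (exp ((real n)\<^sup>2 + real n) + norm xstar)"
    have Kb_bd: "AE \<omega> in M. \<bar>Kb b \<omega>\<bar> \<le> C" if b: "b \<in> Basis" for b
      using AEgood AE_space
    proof eventually_elim
      case (elim \<omega>)
      have e: "0 \<le> eta t \<omega>" "eta t \<omega> \<le> 1/G" using eta0[OF t1 elim(2)] elim(1) t1 by (auto simp: good_def)
      have "\<bar>(x t \<omega> - xstar) \<bullet> b\<bar> \<le> norm (x t \<omega> - xstar)" using b by (metis Basis_le_norm)
      also have "\<dots> \<le> norm (x t \<omega>) + norm xstar" by (rule norm_triangle_ineq4)
      also have "\<dots> \<le> exp ((real n)\<^sup>2 + real n) + norm xstar"
        using gbs(3)[OF elim(2,1), of n] by (simp add: x_def t_def)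
      finally have xb: "\<bar>(x t \<omega> - xstar) \<bullet> b\<bar> \<le> exp ((real n)\<^sup>2 + real n) + norm xstar" .
      have "\<bar>Kb b \<omega>\<bar> \<le> eta t \<omega> * \<bar>(x t \<omega> - xstar) \<bullet> b\<bar>"
        using e by (auto simp: Kb_def abs_mult indicator_def)
      also have "\<dots> \<le> (1/G) * (exp ((real n)\<^sup>2 + real n) + norm xstar)"
        using e xb G0 by (intro mult_mono) auto
      finally show ?case by (simp add: C_def)
    qed
    have int1: "integrable M (\<lambda>\<omega>. Kb b \<omega> * (g t \<omega> \<bullet> b))" if b: "b \<in> Basis" for b
    proof (rule P.integrable_const_bound[where B="C * G"])
      show "AE \<omega> in M. norm (Kb b \<omega> * (g t \<omega> \<bullet> b)) \<le> C * G"
        using Kb_bd[OF b] gG[OF t1]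
      proof eventually_elim
        case (elim \<omega>)
        have "\<bar>g t \<omega> \<bullet> b\<bar> \<le> norm (g t \<omega>)" using b by (metis Basis_le_norm)
        hence "\<bar>g t \<omega> \<bullet> b\<bar> \<le> G" using elim(2) by linarith
        thus ?case using elim(1) by (simp add: abs_mult mult_mono)
      qed
    qed simp
    have fm: "finite_measure_subalgebra M (Fs t)"
      unfolding finite_measure_subalgebra_def finite_measure_subalgebra_axioms_def
      using subF[of t] assms(4) by (auto simp: prob_space_def)
    interpret S: sigma_finite_subalgebra M "Fs t" by (rule finite_measure_subalgebra_is_sigma_finite[OF fm])
    have eqb: "(\<integral>\<omega>. Kb b \<omega> * (g t \<omega> \<bullet> b) \<partial>M) = (\<integral>\<omega>. Kb b \<omega> * (gradF (x t \<omega>) \<bullet> b) \<partial>M)"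
      and int2: "integrable M (\<lambda>\<omega>. Kb b \<omega> * (gradF (x t \<omega>) \<bullet> b))"
      if b: "b \<in> Basis" for b
    proof -
      have gbM: "(\<lambda>\<omega>. g t \<omega> \<bullet> b) \<in> borel_measurable M" by measurable
      have r1: "integrable M (\<lambda>\<omega>. Kb b \<omega> * real_cond_exp M (Fs t) (\<lambda>\<omega>. g t \<omega> \<bullet> b) \<omega>)"
        and r2: "(\<integral>\<omega>. Kb b \<omega> * real_cond_exp M (Fs t) (\<lambda>\<omega>. g t \<omega> \<bullet> b) \<omega> \<partial>M) = (\<integral>\<omega>. Kb b \<omega> * (g t \<omega> \<bullet> b) \<partial>M)"
        using S.real_cond_exp_intg[OF int1[OF b] KbF gbM] by auto
      have ae: "AE \<omega> in M. Kb b \<omega> * real_cond_exp M (Fs t) (\<lambda>\<omega>. g t \<omega> \<bullet> b) \<omega> = Kb b \<omega> * (gradF (x t \<omega>) \<bullet> b)"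
        using ce[OF t1 b] by eventually_elim simp
      have gx: "(\<lambda>\<omega>. gradF (x t \<omega>)) \<in> borel_measurable M" by (rule measurable_compose[OF xM gradFB])
      have gxb: "(\<lambda>\<omega>. gradF (x t \<omega>) \<bullet> b) \<in> borel_measurable M"
        by (rule borel_measurable_inner[OF gx borel_measurable_const])
      have m1: "(\<lambda>\<omega>. Kb b \<omega> * (gradF (x t \<omega>) \<bullet> b)) \<in> borel_measurable M"
        by (rule borel_measurable_times[OF KbM gxb])
      have m2: "(\<lambda>\<omega>. Kb b \<omega> * real_cond_exp M (Fs t) (\<lambda>\<omega>. g t \<omega> \<bullet> b) \<omega>) \<in> borel_measurable M"
        by (rule borel_measurable_times[OF KbM borel_measurable_cond_exp2])
      show "integrable M (\<lambda>\<omega>. Kb b \<omega> * (gradF (x t \<omega>) \<bullet> b))"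
        by (rule integrable_cong_AE_imp[OF r1 m1 ae])
      have "(\<integral>\<omega>. Kb b \<omega> * real_cond_exp M (Fs t) (\<lambda>\<omega>. g t \<omega> \<bullet> b) \<omega> \<partial>M) = (\<integral>\<omega>. Kb b \<omega> * (gradF (x t \<omega>) \<bullet> b) \<partial>M)"
        by (rule integral_cong_AE[OF m2 m1 ae])
      thus "(\<integral>\<omega>. Kb b \<omega> * (g t \<omega> \<bullet> b) \<partial>M) = (\<integral>\<omega>. Kb b \<omega> * (gradF (x t \<omega>) \<bullet> b) \<partial>M)" using r2 by simp
    qed
    define D where "D \<omega> = ll (\<lambda>s. g s \<omega>) (\<lambda>s. eta s \<omega>) t \<bullet> (x t \<omega> - xstar)" for \<omega>
    have Dsum: "indicator A \<omega> * D \<omega> = (\<Sum>b\<in>Basis. Kb b \<omega> * (g t \<omega> \<bullet> b))" for \<omega>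
    proof -
      have "D \<omega> = eta t \<omega> * (g t \<omega> \<bullet> (x t \<omega> - xstar))" unfolding D_def ll_def by (rule inner_scaleR_left)
      also have "\<dots> = eta t \<omega> * (\<Sum>b\<in>Basis. (g t \<omega> \<bullet> b) * ((x t \<omega> - xstar) \<bullet> b))"
        by (subst euclidean_inner[of "g t \<omega>"]) (rule refl)
      finally have "indicator A \<omega> * D \<omega> = indicator A \<omega> * eta t \<omega> * (\<Sum>b\<in>Basis. (g t \<omega> \<bullet> b) * ((x t \<omega> - xstar) \<bullet> b))"
        by (simp only: mult.assoc)
      also have "\<dots> = (\<Sum>b\<in>Basis. indicator A \<omega> * eta t \<omega> * ((g t \<omega> \<bullet> b) * ((x t \<omega> - xstar) \<bullet> b)))"
        by (rule sum_distrib_left)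
      also have "\<dots> = (\<Sum>b\<in>Basis. Kb b \<omega> * (g t \<omega> \<bullet> b))"
        by (rule sum.cong[OF refl]) (simp only: Kb_def mult_ac)
      finally show ?thesis .
    qed
    have Gsum: "(\<Sum>b\<in>Basis. Kb b \<omega> * (gradF (x t \<omega>) \<bullet> b)) = indicator A \<omega> * eta t \<omega> * (gradF (x t \<omega>) \<bullet> (x t \<omega> - xstar))" for \<omega>
    proof -
      have "gradF (x t \<omega>) \<bullet> (x t \<omega> - xstar) = (\<Sum>b\<in>Basis. (gradF (x t \<omega>) \<bullet> b) * ((x t \<omega> - xstar) \<bullet> b))"
        by (rule euclidean_inner)
      hence "indicator A \<omega> * eta t \<omega> * (gradF (x t \<omega>) \<bullet> (x t \<omega> - xstar))
          = (\<Sum>b\<in>Basis. indicator A \<omega> * eta t \<omega> * ((gradF (x t \<omega>) \<bullet> b) * ((x t \<omega> - xstar) \<bullet> b)))"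
        by (simp only: sum_distrib_left)
      also have "\<dots> = (\<Sum>b\<in>Basis. Kb b \<omega> * (gradF (x t \<omega>) \<bullet> b))"
        by (rule sum.cong[OF refl]) (simp only: Kb_def mult_ac)
      finally show ?thesis by simp
    qed
    have ID_int: "integrable M (\<lambda>\<omega>. indicator A \<omega> * D \<omega>)"
      unfolding Dsum by (intro Bochner_Integration.integrable_sum int1)
    have ID_nonneg: "0 \<le> (\<integral>\<omega>. indicator A \<omega> * D \<omega> \<partial>M)"
    proof -
      have "(\<integral>\<omega>. indicator A \<omega> * D \<omega> \<partial>M) = (\<Sum>b\<in>Basis. (\<integral>\<omega>. Kb b \<omega> * (g t \<omega> \<bullet> b) \<partial>M))"
        unfolding Dsum by (intro Bochner_Integration.integral_sum int1)
      also have "\<dots> = (\<Sum>b\<in>Basis. (\<integral>\<omega>. Kb b \<omega> * (gradF (x t \<omega>) \<bullet> b) \<partial>M))"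
        by (intro sum.cong refl eqb)
      also have "\<dots> = (\<integral>\<omega>. (\<Sum>b\<in>Basis. Kb b \<omega> * (gradF (x t \<omega>) \<bullet> b)) \<partial>M)"
        by (intro Bochner_Integration.integral_sum[symmetric] int2)
      also have "\<dots> = (\<integral>\<omega>. indicator A \<omega> * eta t \<omega> * (gradF (x t \<omega>) \<bullet> (x t \<omega> - xstar)) \<partial>M)"
        by (simp only: Gsum)
      also have "\<dots> \<ge> 0"
      proof (rule Bochner_Integration.integral_nonneg)
        fix \<omega> assume \<omega>: "\<omega> \<in> space M"
        have "gradF (x t \<omega>) \<bullet> (x t \<omega> - xstar) \<ge> 0" using coh by (simp add: variationally_coherent_def)
        thus "0 \<le> indicator A \<omega> * eta t \<omega> * (gradF (x t \<omega>) \<bullet> (x t \<omega> - xstar))"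
          using eta0[OF t1 \<omega>] by (simp add: indicator_def)
      qed
      finally show ?thesis .
    qed
    have IY_int: "integrable M (\<lambda>\<omega>. indicator A \<omega> * Yp k \<omega>)" for k
      using integrable_mult_indicator[OF AM Yp_int[of k]] by simp
    have step: "AE \<omega> in M. indicator A \<omega> * Yp (Suc n) \<omega> \<le> indicator A \<omega> * Yp n \<omega> - indicator A \<omega> * D \<omega>"
      using AEgood AE_space
    proof eventually_elim
      case (elim \<omega>)
      have ln: "norm (ll (\<lambda>s. g s \<omega>) (\<lambda>s. eta s \<omega>) (Suc n)) \<le> 1" by (rule l1[OF elim(2,1)]) simp
      have "Yp (Suc n) \<omega> \<le> Yp n \<omega> - D \<omega>"
        using YY_step[where k=n and xs=xstar, OF ln] by (simp add: Yp_def D_def x_def t_def)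
      thus ?case by (simp add: indicator_def)
    qed
    have "(\<integral>\<omega>. indicator A \<omega> * Yp (Suc n) \<omega> \<partial>M) \<le> (\<integral>\<omega>. indicator A \<omega> * Yp n \<omega> - indicator A \<omega> * D \<omega> \<partial>M)"
      by (rule integral_mono_AE[OF IY_int _ step]) (intro Bochner_Integration.integrable_diff IY_int ID_int)
    also have "\<dots> = (\<integral>\<omega>. indicator A \<omega> * Yp n \<omega> \<partial>M) - (\<integral>\<omega>. indicator A \<omega> * D \<omega> \<partial>M)"
      by (rule Bochner_Integration.integral_diff[OF IY_int ID_int])
    also have "\<dots> \<le> (\<integral>\<omega>. indicator A \<omega> * Yp n \<omega> \<partial>M)" using ID_nonneg by simp
    finally show ?thesis .
  qed
  have Yconv: "AE \<omega> in M. convergent (\<lambda>n. Yp n \<omega>)"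
    by (rule P.supermart_conv[where F="\<lambda>k. Fs (Suc k)" and K=Kc, OF subF monoF YpF Yp_int Yp_lb sup]) simp_all
  define BB where "BB t \<omega> = bregman (\<phi> t \<omega>) xstar (x t \<omega>)" for t \<omega>
  have BB_eq: "BB t \<omega> = CC (\<lambda>s. g s \<omega>) (\<lambda>s. eta s \<omega>) xstar (t-1) + Yp (t-1) \<omega>" for t \<omega>
    by (simp add: BB_def \<phi>_def x_def bregman_alg Yp_def)
  have BBM: "BB t \<in> borel_measurable M" for t
  proof -
    have [measurable]: "(\<lambda>\<omega>. CC (\<lambda>s. g s \<omega>) (\<lambda>s. eta s \<omega>) xstar (t-1)) \<in> borel_measurable M"
      unfolding CC_def by (rule psi_meas) (use SS_pos in auto)
    show ?thesis unfolding BB_eq[abs_def] by measurable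
  qed
  define Binf where "Binf \<omega> = lim (\<lambda>t. BB t \<omega>)" for \<omega>
  have "Binf \<in> borel_measurable M" unfolding Binf_def using BBM by measurable
  moreover have "AE \<omega> in M. (\<lambda>t. bregman (\<phi> t \<omega>) xstar (x t \<omega>)) \<longlonglongrightarrow> Binf \<omega>"
    using AEgood Yconv AE_space
  proof eventually_elim
    case (elim \<omega>)
    have "convergent (CC (\<lambda>s. g s \<omega>) (\<lambda>s. eta s \<omega>) xstar)" by (rule gbs) (use elim in auto)
    hence "convergent (\<lambda>k. CC (\<lambda>s. g s \<omega>) (\<lambda>s. eta s \<omega>) xstar k + Yp k \<omega>)"
      using elim(2) by (rule convergent_add)
    then obtain L where L: "(\<lambda>k. CC (\<lambda>s. g s \<omega>) (\<lambda>s. eta s \<omega>) xstar k + Yp k \<omega>) \<longlonglongrightarrow> L"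
      by (auto simp: convergent_def)
    have "(\<lambda>t. BB (Suc t) \<omega>) \<longlonglongrightarrow> L" using L by (simp add: BB_eq)
    hence "(\<lambda>t. BB t \<omega>) \<longlonglongrightarrow> L" by (rule LIMSEQ_imp_Suc)
    moreover hence "Binf \<omega> = L" unfolding Binf_def by (rule limI)
    ultimately show ?case by (simp add: BB_def)
  qed
  ultimately show ?thesis by blast
qed


end
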